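(* Let $A$ and $B$ be finite commutative groups and let $p_1,\dots,p_t$ be the distinct prime divisors of $|A|\,|B|$. For $i=1,\dots,t$ let $A_i$ and $B_i$ denote the (possibly trivial) $p_i$-primary components of $A$ and $B$, so that $A=A_1\times\cdots\times A_t$ and $B=B_1\times\cdots\times B_t$. Suppose $A_i=\mathbb{Z}_{q_{i,1}}\times\cdots\times\mathbb{Z}_{q_{i,n_i}}$ with each $q_{i,k}$ a power of $p_i$ ($n_i\ge 0$), and put $n=n_1+\cdots+n_t$, so that $A=(\mathbb{Z}_{q_{1,1}}\times\cdots\times\mathbb{Z}_{q_{1,n_1}})\times\cdots\times(\mathbb{Z}_{q_{t,1}}\times\cdots\times\mathbb{Z}_{q_{t,n_t}})$; attach one variable to each of these $n$ cyclic factors, the variables $X_{n_1+\cdots+n_{i-1}+1},\dots,X_{n_1+\cdots+n_i}$ belonging to $A_i$. Then $$B\binom{X_1,\dots,X_n}{A}=B_1\binom{X_1,\dots,X_{n_1}}{A_1}\times\cdots\times B_t\binom{X_{n-n_t+1},\dots,X_n}{A_t},$$ i.e. a $B$-polyfract $P=(P_1,\dots,P_t)$ (with $P_i$ a $B_i$-polyfract) has the periodicity given by $A$ if and only if each $P_i$ involves only the variables belonging to $A_i$ and is periodic with respect to $A_i$. Moreover, the set of maps $A\to B$ induced by these periodic polyfracts is exactly $$\{(a_1,\dots,a_t)\mapsto (f_1(a_1),\dots,f_t(a_t)) \;:\; f_1\in B_1^{A_1},\dots,f_t\in B_t^{A_t}\}.$$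
   Context: Notation: $\mathbb{Z}_r=\mathbb{Z}/r\mathbb{Z}$, with $\mathbb{Z}_0=\mathbb{Z}$ and $\mathbb{Z}_1=\{0\}$. For $\delta\in\mathbb{N}$, $\binom{X}{\delta}=X(X-1)\cdots(X-\delta+1)/\delta!$ and $\binom{X}{0}=1$; for $\delta\in\mathbb{N}^n$ the monofract is $\binom{X_1,\dots,X_n}{\delta_1,\dots,\delta_n}=\prod_{j}\binom{X_j}{\delta_j}$. For a finitely generated commutative group $B$, a $B$-polyfract in $X_1,\dots,X_n$ is a formal finite sum $P=\sum_{\delta\in\mathbb{N}^n}P_\delta\binom{X_1,\dots,X_n}{\delta_1,\dots,\delta_n}$ with coefficients $P_\delta\in B$; it is evaluated at $x\in\mathbb{Z}^n$ by $P(x)=\sum_\delta \big(\prod_j\binom{x_j}{\delta_j}\big)P_\delta\in B$ (integer multiples in $B$). The set of these is $B\binom{X_1,\dots,X_n}{\mathbb{Z}^n}$; if $B=B'\times B''$, a $B$-polyfract is identified with the pair of its coordinate polyfracts. For positive integers $q_1,\dots,q_n$, $B\binom{X_1,\dots,X_n}{\mathbb{Z}_{q_1}\times\cdots\times\mathbb{Z}_{q_n}}$ denotes the set of $B$-polyfracts $P$ whose evaluation map $\mathbb{Z}^n\to B$ is $q_j$-periodic in the $j$-th coordinate for every $j$; such a map is identified with the induced map $\mathbb{Z}_{q_1}\times\cdots\times\mathbb{Z}_{q_n}\to B$. When the domain is written as a product $A$ of cyclic groups, $B\binom{X_1,\dots,X_n}{A}$ means this set for the corresponding $q_j$. *)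

theory Defs
  imports "HOL-Computational_Algebra.Primes" "HOL-Library.FuncSet"
begin

definition intmul :: "int \<Rightarrow> 'b::ab_group_add \<Rightarrow> 'b" where
  "intmul m b = (if 0 \<le> m then (\<Sum>_<nat m. b) else - (\<Sum>_<nat (- m). b))"

definition int_binom :: "int \<Rightarrow> nat \<Rightarrow> int" where
  "int_binom x d = (\<Prod>i<d. x - int i) div fact d"

text \<open>Coefficient maps of polyfracts in n variables: delta (a list of length n)
  mapsto the coefficient; finitely many nonzero coefficients.\<close>
definition polyfract :: "nat \<Rightarrow> (nat list \<Rightarrow> 'b::ab_group_add) \<Rightarrow> bool" where
  "polyfract n C \<longleftrightarrow> finite {d. C d \<noteq> 0} \<and> (\<forall>d. C d \<noteq> 0 \<longrightarrow> length d = n)"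

definition peval :: "(nat list \<Rightarrow> 'b::ab_group_add) \<Rightarrow> int list \<Rightarrow> 'b" where
  "peval C x = (\<Sum>d\<in>{d. C d \<noteq> 0}. intmul (\<Prod>j<length x. int_binom (x!j) (d!j)) (C d))"

definition periodic_pf :: "nat list \<Rightarrow> (nat list \<Rightarrow> 'b::ab_group_add) \<Rightarrow> bool" where
  "periodic_pf qs C \<longleftrightarrow> polyfract (length qs) C \<and>
     (\<forall>x j. length x = length qs \<longrightarrow> j < length qs \<longrightarrow>
        peval C (x[j := x!j + int (qs!j)]) = peval C x)"

text \<open>Representatives of Z_{q_1} x ... x Z_{q_n}.\<close>
definition Arep :: "nat list \<Rightarrow> int list set" where
  "Arep qs = {x. length x = length qs \<and> (\<forall>j<length qs. 0 \<le> x!j \<and> x!j < int (qs!j))}"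

definition prim :: "nat \<Rightarrow> 'b::ab_group_add set" where
  "prim p = {b. \<exists>k. intmul (int (p ^ k)) b = 0}"

text \<open>i-th coordinate of b under B = B_1 x ... x B_t (B_j the ps!j-primary component).\<close>
definition pproj :: "nat list \<Rightarrow> nat \<Rightarrow> 'b::ab_group_add \<Rightarrow> 'b" where
  "pproj ps i b = (THE c. \<exists>cs. length cs = length ps \<and> (\<forall>j<length ps. cs!j \<in> prim (ps!j))
                     \<and> sum_list cs = b \<and> c = cs!i)"

definition coordC :: "nat list \<Rightarrow> nat \<Rightarrow> (nat list \<Rightarrow> 'b::ab_group_add) \<Rightarrow> nat list \<Rightarrow> 'b" where
  "coordC ps i C = (\<lambda>d. pproj ps i (C d))"

text \<open>Offset of block i (the variables belonging to A_i are indices off..<off+length (Q!i)).\<close>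
definition off :: "nat list list \<Rightarrow> nat \<Rightarrow> nat" where
  "off Q i = sum_list (map length (take i Q))"

definition blockvars :: "nat list list \<Rightarrow> nat \<Rightarrow> nat set" where
  "blockvars Q i = {off Q i ..< off Q i + length (Q!i)}"

definition only_block :: "nat list list \<Rightarrow> nat \<Rightarrow> (nat list \<Rightarrow> 'b::zero) \<Rightarrow> bool" where
  "only_block Q i C \<longleftrightarrow> (\<forall>d. C d \<noteq> 0 \<longrightarrow> (\<forall>j<length d. j \<notin> blockvars Q i \<longrightarrow> d!j = 0))"

definition blockC :: "nat list list \<Rightarrow> nat \<Rightarrow> (nat list \<Rightarrow> 'b::zero) \<Rightarrow> nat list \<Rightarrow> 'b" where
  "blockC Q i C = (\<lambda>d'. if length d' = length (Q!i)
      then C (replicate (off Q i) 0 @ d' @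
              replicate (length (concat Q) - off Q i - length (Q!i)) 0)
      else 0)"

definition blockx :: "nat list list \<Rightarrow> nat \<Rightarrow> int list \<Rightarrow> int list" where
  "blockx Q i x = take (length (Q!i)) (drop (off Q i) x)"

end

theory Submission
  imports Defs "HOL.Binomial_Plus"
begin


lemma int_binom_Suc_Suc: "int_binom (x+1) (Suc k) = int_binom x k + int_binom x (Suc k)"
  using gbinomial_int_Suc_Suc[of x k] by (simp add: int_binom_def gbinomial_prod_rev atLeast0LessThan)
lemma int_binom_nat: "int_binom (int n) k = int (n choose k)"
  using gbinomial_nneg[of "int n" k] by (simp add: int_binom_def gbinomial_prod_rev atLeast0LessThan)
lemma int_binom_0[simp]: "int_binom x 0 = 1"
  by (simp add: int_binom_def)

lemma intmul_0[simp]: "intmul 0 b = 0" by (simp add: intmul_def)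

lemma intmul_succ: "intmul (m + 1) b = intmul m b + b"
proof (cases "0 \<le> m")
  case True
  then have "nat (m+1) = Suc (nat m)" by simp
  then show ?thesis using True by (simp add: intmul_def)
next
  case False
  show ?thesis
  proof (cases "m = -1")
    case True then show ?thesis by (simp add: intmul_def)
  next
    case F2: False
    then have "nat (- m) = Suc (nat (- (m+1)))" using False by simp
    then show ?thesis using False F2 by (simp add: intmul_def)
  qed
qed

lemma intmul_pred: "intmul (m - 1) b = intmul m b - b"
  using intmul_succ[of "m - 1" b] by simp

lemma intmul_add: "intmul (m + k) b = intmul m b + intmul k b"
proof (induct k rule: int_induct[where k=0])
  case base then show ?case by simp
next
  case (step1 i) then show ?case using intmul_succ[of "m+i" b] intmul_succ[of i b] by (simp add: add.assoc[symmetric])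
next
  case (step2 i)
  have "intmul (m + (i - 1)) b = intmul (m + i - 1) b" by (simp add: algebra_simps)
  also have "\<dots> = intmul (m+i) b - b" by (rule intmul_pred)
  finally have "intmul (m + (i - 1)) b = intmul m b + intmul i b - b" using step2 by simp
  moreover have "intmul (i - 1) b = intmul i b - b" by (rule intmul_pred)
  ultimately show ?case by (metis add_diff_eq)
qed

lemma intmul_1[simp]: "intmul 1 b = b" using intmul_succ[of 0 b] by simp

lemma intmul_uminus: "intmul (- m) b = - intmul m b"
  using intmul_add[of m "-m" b] by (simp add: eq_neg_iff_add_eq_0 add.commute)

lemma intmul_diff: "intmul (m - k) b = intmul m b - intmul k b"
  using intmul_add[of m "-k" b] intmul_uminus[of k b] by simp

lemma intmul_zero[simp]: "intmul m (0::'b::ab_group_add) = 0"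
  by (simp add: intmul_def)

lemma intmul_distrib: "intmul m (a + c) = intmul m a + intmul m c"
proof (induct m rule: int_induct[where k=0])
  case base then show ?case by simp
next
  case (step1 i) then show ?case by (simp only: intmul_succ) (simp add: algebra_simps)
next
  case (step2 i) then show ?case by (simp only: intmul_pred) (simp add: algebra_simps)
qed

lemma intmul_neg: "intmul m (- a) = - intmul m a"
  using intmul_distrib[of m a "-a"] by (simp add: eq_neg_iff_add_eq_0 add.commute)

lemma intmul_minus: "intmul m (a - c) = intmul m a - intmul m c"
  using intmul_distrib[of m a "-c"] intmul_neg[of m c] by simp

lemma intmul_mult: "intmul (m * k) b = intmul m (intmul k b)"
proof (induct m rule: int_induct[where k=0])
  case base then show ?case by simp
next
  case (step1 i) then show ?case by (simp only: distrib_right intmul_add intmul_succ) simp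
next
  case (step2 i) then show ?case by (simp only: left_diff_distrib intmul_diff intmul_pred) simp
qed

lemma intmul_sum_left: "intmul (\<Sum>i\<in>A. f i) b = (\<Sum>i\<in>A. intmul (f i) b)"
  by (induct A rule: infinite_finite_induct) (auto simp: intmul_add)

lemma intmul_sum_right: "intmul m (\<Sum>i\<in>A. f i) = (\<Sum>i\<in>A. intmul m (f i))"
  by (induct A rule: infinite_finite_induct) (auto simp: intmul_distrib)

lemma intmul_cong:
  assumes "intmul M b = 0" "M dvd (m - k)"
  shows "intmul m b = intmul k b"
proof -
  obtain r where "m - k = r * M" using assms(2) by (metis dvd_def mult.commute)
  then have "intmul (m - k) b = intmul r (intmul M b)" by (simp add: intmul_mult)
  then show ?thesis using assms(1) by (simp add: intmul_diff)
qed



definition mf :: "int list \<Rightarrow> nat list \<Rightarrow> int" where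
  "mf x d = (\<Prod>j<length x. int_binom (x!j) (d!j))"

lemma peval_mf: "peval C x = (\<Sum>d\<in>{d. C d \<noteq> 0}. intmul (mf x d) (C d))"
  by (simp add: peval_def mf_def)

lemma peval_superset:
  assumes "finite S" "{d. C d \<noteq> 0} \<subseteq> S"
  shows "peval C x = (\<Sum>d\<in>S. intmul (mf x d) (C d))"
  unfolding peval_mf using assms by (intro sum.mono_neutral_left) auto

lemma peval_intmul:
  assumes "finite {d. C d \<noteq> 0}"
  shows "peval (\<lambda>d. intmul E (C d)) x = intmul E (peval C x)"
proof -
  have "peval (\<lambda>d. intmul E (C d)) x = (\<Sum>d\<in>{d. C d \<noteq> 0}. intmul (mf x d) (intmul E (C d)))"
    by (rule peval_superset) (use assms in auto)
  also have "\<dots> = (\<Sum>d\<in>{d. C d \<noteq> 0}. intmul E (intmul (mf x d) (C d)))"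
    by (simp add: intmul_mult[symmetric] mult.commute)
  also have "\<dots> = intmul E (peval C x)" by (simp add: peval_mf intmul_sum_right)
  finally show ?thesis .
qed

lemma peval_sum:
  assumes "finite I" "\<And>i. i \<in> I \<Longrightarrow> finite {d. C i d \<noteq> 0}"
  shows "peval (\<lambda>d. \<Sum>i\<in>I. C i d) x = (\<Sum>i\<in>I. peval (C i) x)"
proof -
  define S where "S = (\<Union>i\<in>I. {d. C i d \<noteq> 0})"
  have fS: "finite S" using assms by (simp add: S_def)
  have "peval (\<lambda>d. \<Sum>i\<in>I. C i d) x = (\<Sum>d\<in>S. intmul (mf x d) (\<Sum>i\<in>I. C i d))"
  proof (rule peval_superset[OF fS])
    show "{d. (\<Sum>i\<in>I. C i d) \<noteq> 0} \<subseteq> S"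
    proof
      fix d assume "d \<in> {d. (\<Sum>i\<in>I. C i d) \<noteq> 0}"
      then have ne: "(\<Sum>i\<in>I. C i d) \<noteq> 0" by simp
      have "\<exists>i\<in>I. C i d \<noteq> 0"
      proof (rule ccontr)
        assume "\<not> (\<exists>i\<in>I. C i d \<noteq> 0)"
        then have "\<forall>i\<in>I. C i d = 0" by blast
        then have "(\<Sum>i\<in>I. C i d) = 0" by (rule sum.neutral)
        with ne show False by simp
      qed
      then show "d \<in> S" by (auto simp: S_def)
    qed
  qed
  also have "\<dots> = (\<Sum>i\<in>I. \<Sum>d\<in>S. intmul (mf x d) (C i d))"
    by (simp add: intmul_sum_right sum.swap[of _ S])
  also have "\<dots> = (\<Sum>i\<in>I. peval (C i) x)"
    by (rule sum.cong[OF refl], rule peval_superset[symmetric, OF fS]) (auto simp: S_def)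
  finally show ?thesis .
qed

lemma peval_add:
  assumes "finite {d. C d \<noteq> 0}" "finite {d. D d \<noteq> 0}"
  shows "peval (\<lambda>d. C d + D d) x = peval C x + peval D x"
  using peval_sum[of "{True, False}" "\<lambda>i. if i then C else D" x] assms by auto



lemma mf_nat_self: "mf (map int d) d = 1"
  by (simp add: mf_def int_binom_nat)

lemma mf_nat_zero: "length d = length d0 \<Longrightarrow> j < length d0 \<Longrightarrow> d0!j < d!j \<Longrightarrow> mf (map int d0) d = 0"
  unfolding mf_def by (rule prod_zero) (auto simp: int_binom_nat intro!: bexI[where x=j])

lemma peval_unique:
  assumes pf: "polyfract n C"
    and z: "\<forall>x. length x = n \<and> (\<forall>j<n. 0 \<le> x!j) \<longrightarrow> peval C x = 0"
  shows "C d = 0"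
proof (rule ccontr)
  assume "C d \<noteq> 0"
  define S where "S = {d. C d \<noteq> 0}"
  have fS: "finite S" and lS: "\<And>d. d \<in> S \<Longrightarrow> length d = n" using pf by (auto simp: polyfract_def S_def)
  obtain d0 where d0: "d0 \<in> S" and mn: "\<And>d. d \<in> S \<Longrightarrow> sum_list d0 \<le> sum_list d"
    using ex_has_least_nat[of "\<lambda>d. d \<in> S" d sum_list] \<open>C d \<noteq> 0\<close> by (auto simp: S_def)
  have ld0: "length d0 = n" using lS d0 by auto
  define x where "x = map int d0"
  have "peval C x = (\<Sum>d\<in>S. intmul (mf x d) (C d))" by (simp add: peval_mf S_def)
  also have "\<dots> = intmul (mf x d0) (C d0) + (\<Sum>d\<in>S - {d0}. intmul (mf x d) (C d))"
    using fS d0 by (simp add: sum.remove)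
  also have "(\<Sum>d\<in>S - {d0}. intmul (mf x d) (C d)) = 0"
  proof (rule sum.neutral, rule ballI)
    fix d assume dS: "d \<in> S - {d0}"
    then have ld: "length d = n" using lS by auto
    show "intmul (mf x d) (C d) = 0"
    proof (cases "\<exists>j<n. d0!j < d!j")
      case True
      then obtain j where "j < n" "d0!j < d!j" by auto
      then have "mf x d = 0" unfolding x_def using ld ld0 by (intro mf_nat_zero) auto
      then show ?thesis by simp
    next
      case False
      then have le: "\<forall>j<n. d!j \<le> d0!j" by auto
      have "d \<noteq> d0" using dS by auto
      then obtain j where "j < n" "d!j \<noteq> d0!j" using ld ld0 nth_equalityI by metis
      then have lt: "d!j < d0!j" using le by (meson le_neq_implies_less)
      have "sum_list d = (\<Sum>i = 0..<n. d!i)" using ld by (simp add: sum_list_sum_nth)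
      also have "\<dots> < (\<Sum>i = 0..<n. d0!i)"
        by (rule sum_strict_mono_ex1) (use le lt \<open>j<n\<close> in auto)
      also have "\<dots> = sum_list d0" using ld0 by (simp add: sum_list_sum_nth)
      finally show ?thesis using mn[of d] dS by auto
    qed
  qed
  finally have "peval C x = C d0" by (simp add: x_def mf_nat_self)
  moreover have "peval C x = 0" using z ld0 by (auto simp: x_def)
  ultimately show False using d0 by (auto simp: S_def)
qed



definition mfr :: "int list \<Rightarrow> nat list \<Rightarrow> nat \<Rightarrow> int" where
  "mfr x d j = (\<Prod>l\<in>{..<length x} - {j}. int_binom (x!l) (d!l))"

lemma mf_split: "j < length x \<Longrightarrow> mf x d = int_binom (x!j) (d!j) * mfr x d j"
  unfolding mf_def mfr_def by (rule prod.remove) auto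

lemma mfr_upd_x: "mfr (x[j:=v]) d j = mfr x d j"
  unfolding mfr_def by (rule prod.cong) auto

lemma mfr_upd_d: "j < length d \<Longrightarrow> mfr x (d[j:=k]) j = mfr x d j"
  unfolding mfr_def by (rule prod.cong) auto

definition shiftC :: "nat \<Rightarrow> (nat list \<Rightarrow> 'b) \<Rightarrow> nat list \<Rightarrow> 'b" where
  "shiftC j C = (\<lambda>d. C (d[j := Suc (d!j)]))"

lemma peval_delta:
  fixes C :: "nat list \<Rightarrow> 'b::ab_group_add"
  assumes pf: "polyfract n C" and j: "j < n" and lx: "length x = n"
  shows "peval C (x[j := x!j + 1]) - peval C x = peval (shiftC j C) x"
proof -
  define S where "S = {d. C d \<noteq> 0}"
  have fS: "finite S" and lS: "\<And>d. d \<in> S \<Longrightarrow> length d = n" using pf by (auto simp: polyfract_def S_def)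
  define S1 where "S1 = {d\<in>S. d!j \<noteq> 0}"
  have fS1: "finite S1" using fS by (simp add: S1_def)
  define g where "g = (\<lambda>d::nat list. d[j := d!j - 1])"
  have jx: "j < length x" using j lx by simp
  have "peval C (x[j := x!j + 1]) - peval C x = (\<Sum>d\<in>S. intmul (mf (x[j := x!j + 1]) d - mf x d) (C d))"
    by (simp add: peval_mf S_def intmul_diff sum_subtractf)
  also have "\<dots> = (\<Sum>d\<in>S. if d!j = 0 then 0 else intmul (mf x (g d)) (C d))"
  proof (rule sum.cong[OF refl])
    fix d assume "d \<in> S"
    then have ld: "length d = n" using lS by auto
    have e1: "mf (x[j := x!j + 1]) d = int_binom (x!j + 1) (d!j) * mfr x d j"
      using mf_split[of j "x[j := x!j + 1]" d] jx by (simp add: mfr_upd_x)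
    have e2: "mf x d = int_binom (x!j) (d!j) * mfr x d j" using mf_split[of j x d] jx by simp
    show "intmul (mf (x[j := x!j + 1]) d - mf x d) (C d) = (if d!j = 0 then 0 else intmul (mf x (g d)) (C d))"
    proof (cases "d!j")
      case 0 then show ?thesis using e1 e2 by simp
    next
      case (Suc k)
      have e3: "mf x (g d) = int_binom (x!j) k * mfr x d j"
        using mf_split[of j x "g d"] jx ld j Suc by (simp add: g_def mfr_upd_d)
      have "mf (x[j := x!j + 1]) d - mf x d = (int_binom (x!j + 1) (Suc k) - int_binom (x!j) (Suc k)) * mfr x d j"
        using e1 e2 Suc by (simp add: left_diff_distrib)
      also have "\<dots> = mf x (g d)" using e3 by (simp add: int_binom_Suc_Suc)
      finally show ?thesis using Suc by simp
    qed
  qed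
  also have "\<dots> = (\<Sum>d\<in>S. if d!j \<noteq> 0 then intmul (mf x (g d)) (C d) else 0)"
    by (rule sum.cong) auto
  also have "\<dots> = (\<Sum>d\<in>S1. intmul (mf x (g d)) (C d))"
    unfolding S1_def by (rule sum.inter_filter[OF fS, symmetric])
  also have "\<dots> = (\<Sum>d'\<in>g ` S1. intmul (mf x d') (shiftC j C d'))"
  proof -
    have inv: "\<And>d. d \<in> S1 \<Longrightarrow> (g d)[j := Suc (g d ! j)] = d"
      using lS j by (auto simp: S1_def g_def)
    have "inj_on g S1" by (rule inj_on_inverseI[where g = "\<lambda>d. d[j := Suc (d!j)]"]) (rule inv)
    then show ?thesis by (simp add: sum.reindex shiftC_def inv)
  qed
  also have "\<dots> = peval (shiftC j C) x"
  proof (rule peval_superset[symmetric])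
    show "finite (g ` S1)" using fS1 by simp
    show "{d. shiftC j C d \<noteq> 0} \<subseteq> g ` S1"
    proof
      fix d assume "d \<in> {d. shiftC j C d \<noteq> 0}"
      then have c: "C (d[j := Suc (d!j)]) \<noteq> 0" by (simp add: shiftC_def)
      then have "length (d[j := Suc (d!j)]) = n" using lS[of "d[j := Suc (d!j)]"] by (simp add: S_def)
      then have ld: "length d = n" by simp
      have "d[j := Suc (d!j)] \<in> S1" using c ld j by (simp add: S1_def S_def)
      moreover have "g (d[j := Suc (d!j)]) = d" using ld j by (simp add: g_def)
      ultimately show "d \<in> g ` S1" by (rule rev_image_eqI[OF _ sym])
    qed
  qed
  finally show ?thesis .
qed

lemma shiftC_polyfract: "polyfract n C \<Longrightarrow> j < n \<Longrightarrow> polyfract n (shiftC j C)"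
proof -
  assume pf: "polyfract n C" and j: "j < n"
  define g where "g = (\<lambda>d::nat list. d[j := d!j - 1])"
  have sub: "{d. shiftC j C d \<noteq> 0} \<subseteq> g ` {d. C d \<noteq> 0}"
  proof
    fix d assume "d \<in> {d. shiftC j C d \<noteq> 0}"
    then have c: "C (d[j := Suc (d!j)]) \<noteq> 0" by (simp add: shiftC_def)
    then have "length (d[j := Suc (d!j)]) = n" using pf by (auto simp: polyfract_def)
    then have ld: "length d = n" by simp
    have gd: "g (d[j := Suc (d!j)]) = d" using ld j by (simp add: g_def)
    show "d \<in> g ` {d. C d \<noteq> 0}"
    proof (rule image_eqI)
      show "d = g (d[j := Suc (d!j)])" using gd by simp
      show "d[j := Suc (d!j)] \<in> {d. C d \<noteq> 0}" using c by simp
    qed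
  qed
  have "finite {d. shiftC j C d \<noteq> 0}"
  proof (rule finite_subset[OF sub], rule finite_imageI)
    show "finite {d. C d \<noteq> 0}" using pf by (simp add: polyfract_def)
  qed
  moreover have "\<forall>d. shiftC j C d \<noteq> 0 \<longrightarrow> length d = n"
  proof (intro allI impI)
    fix d assume "shiftC j C d \<noteq> 0"
    then have "C (d[j := Suc (d!j)]) \<noteq> 0" by (simp add: shiftC_def)
    have pl: "\<And>e. C e \<noteq> 0 \<Longrightarrow> length e = n" using pf by (simp add: polyfract_def)
    from pl[OF \<open>C (d[j := Suc (d!j)]) \<noteq> 0\<close>] show "length d = n" by simp
  qed
  ultimately show ?thesis by (simp add: polyfract_def)
qed

lemma const_imp_zero:
  fixes C :: "nat list \<Rightarrow> 'b::ab_group_add"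
  assumes pf: "polyfract n C" and j: "j < n"
    and c: "\<And>x. length x = n \<Longrightarrow> peval C (x[j := x!j + 1]) = peval C x"
    and d: "C d \<noteq> 0"
  shows "d!j = 0"
proof (rule ccontr)
  assume "d!j \<noteq> 0"
  have ld: "length d = n" using pf d by (auto simp: polyfract_def)
  have z: "shiftC j C e = 0" for e
  proof (rule peval_unique[OF shiftC_polyfract[OF pf j]], intro allI impI)
    fix x :: "int list" assume "length x = n \<and> (\<forall>j<n. 0 \<le> x ! j)"
    then have lx: "length x = n" by simp
    have "peval C (x[j := x!j + 1]) - peval C x = peval (shiftC j C) x" by (rule peval_delta[OF pf j lx])
    then show "peval (shiftC j C) x = 0" using c[OF lx] by simp
  qed
  have "shiftC j C (d[j := d!j - 1]) = C d"
    using \<open>d!j \<noteq> 0\<close> ld j by (simp add: shiftC_def)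
  then show False using z d by simp
qed



lemma binom_prime_power_dvd:
  fixes p :: nat
  assumes p: "prime p" and i: "0 < i" "i < p ^ K" and MKN: "M + K \<le> N + 1"
  shows "p ^ M dvd (p ^ N choose i)"
proof (cases "M = 0")
  case True then show ?thesis by simp
next
  case False
  have pos: "p ^ K > 0" using p by (simp add: prime_gt_0_nat)
  have KN: "K \<le> N" using False MKN by simp
  have "p ^ K \<le> p ^ N" using KN p by (simp add: prime_gt_Suc_0_nat power_increasing)
  then have iN: "i \<le> p ^ N" using i by simp
  define C where "C = p ^ N choose i"
  have C0: "C \<noteq> 0" using iN by (simp add: C_def)
  have eq: "i * C = p ^ N * ((p ^ N - 1) choose (i - 1))"
    using times_binomial_minus1_eq[OF i(1)] by (simp add: C_def)
  have nu: "\<not> is_unit p" using p not_prime_unit by blast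
  have "p ^ N dvd i * C" by (simp add: eq)
  then have m1: "N \<le> multiplicity p (i * C)"
    using power_dvd_iff_le_multiplicity[of "i * C" p N] nu C0 i(1) by simp
  have m2: "multiplicity p (i * C) = multiplicity p i + multiplicity p C"
    using prime_elem_multiplicity_mult_distrib[of p i C] p C0 i(1) by simp
  have "\<not> p ^ K dvd i" using i by (auto dest: dvd_imp_le)
  then have m3: "multiplicity p i < K"
    using power_dvd_iff_le_multiplicity[of i p K] nu i(1) by simp
  have "M \<le> multiplicity p C" using m1 m2 m3 MKN by linarith
  then show ?thesis unfolding C_def by (rule multiplicity_dvd')
qed

definition dlt :: "(int \<Rightarrow> int) \<Rightarrow> int \<Rightarrow> int" where
  "dlt h = (\<lambda>t. h (t + 1) - h t)"

lemma dlt_pow_diff: "(dlt ^^ i) (\<lambda>t. f t - g t) = (\<lambda>t. (dlt ^^ i) f t - (dlt ^^ i) g t)"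
  by (induct i) (auto simp: dlt_def algebra_simps)

lemma dlt_pow_shift: "(dlt ^^ i) (\<lambda>t. h (t + 1)) = (\<lambda>t. (dlt ^^ i) h (t + 1))"
  by (induct i) (auto simp: dlt_def algebra_simps)

lemma pascal_sum:
  fixes a :: "nat \<Rightarrow> int"
  shows "(\<Sum>i\<le>Suc n. int (Suc n choose i) * a i) =
         (\<Sum>i\<le>n. int (n choose i) * a i) + (\<Sum>i\<le>n. int (n choose i) * a (Suc i))"
proof -
  have A: "(\<Sum>i\<le>Suc n. int (Suc n choose i) * a i) = int (Suc n choose 0) * a 0 + (\<Sum>i\<le>n. int (Suc n choose Suc i) * a (Suc i))"
    by (rule sum.atMost_Suc_shift)
  have A2: "(\<Sum>i\<le>n. int (Suc n choose Suc i) * a (Suc i)) = (\<Sum>i\<le>n. int (n choose Suc i) * a (Suc i)) + (\<Sum>i\<le>n. int (n choose i) * a (Suc i))"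
    by (simp add: sum.distrib algebra_simps)
  have B: "(\<Sum>i\<le>Suc n. int (n choose i) * a i) = int (n choose 0) * a 0 + (\<Sum>i\<le>n. int (n choose Suc i) * a (Suc i))"
    by (rule sum.atMost_Suc_shift)
  have C: "(\<Sum>i\<le>Suc n. int (n choose i) * a i) = (\<Sum>i\<le>n. int (n choose i) * a i)" by simp
  show ?thesis using A A2 B C by simp
qed

lemma newton: "h (x + int n) = (\<Sum>i\<le>n. int (n choose i) * (dlt ^^ i) h x)"
proof (induct n arbitrary: h)
  case 0 then show ?case by simp
next
  case (Suc n)
  have "h (x + int (Suc n)) = h (x + int n) + dlt h (x + int n)"
    by (simp add: dlt_def algebra_simps)
  also have "\<dots> = (\<Sum>i\<le>n. int (n choose i) * (dlt ^^ i) h x) + (\<Sum>i\<le>n. int (n choose i) * (dlt ^^ i) (dlt h) x)"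
    using Suc[of h] Suc[of "dlt h"] by simp
  also have "\<dots> = (\<Sum>i\<le>Suc n. int (Suc n choose i) * (dlt ^^ i) h x)"
  proof -
    have "\<And>i. (dlt ^^ Suc i) h = (dlt ^^ i) (dlt h)" by (simp add: funpow_Suc_right del: funpow.simps)
    then show ?thesis using pascal_sum[of n "\<lambda>i. (dlt ^^ i) h x"] by simp
  qed
  finally show ?case .
qed

lemma dlt_apply: "dlt h t = h (t + 1) - h t" by (simp add: dlt_def)

lemma dlt_periodic: "(\<forall>t. h (t + T) = h t) \<Longrightarrow> (\<forall>t. (dlt ^^ i) h (t + T) = (dlt ^^ i) h t)"
proof (induct i)
  case 0 then show ?case by simp
next
  case (Suc i)
  then have IH: "\<And>t. (dlt ^^ i) h (t + T) = (dlt ^^ i) h t" by blast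
  show ?case
  proof
    fix t
    have "(dlt ^^ Suc i) h (t + T) = (dlt ^^ i) h ((t + 1) + T) - (dlt ^^ i) h (t + T)"
      by (simp add: dlt_apply algebra_simps)
    also have "\<dots> = (dlt ^^ Suc i) h t" by (simp only: IH) (simp add: dlt_apply)
    finally show "(dlt ^^ Suc i) h (t + T) = (dlt ^^ Suc i) h t" .
  qed
qed

lemma dlt_binom: "(dlt ^^ i) (\<lambda>t. int_binom t k) = (\<lambda>t. if i \<le> k then int_binom t (k - i) else 0)"
proof (induct i)
  case 0 then show ?case by simp
next
  case (Suc i)
  show ?case
  proof (rule ext)
    fix t
    show "(dlt ^^ Suc i) (\<lambda>t. int_binom t k) t = (if Suc i \<le> k then int_binom t (k - Suc i) else 0)"
    proof (cases "Suc i \<le> k")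
      case True
      then have "k - i = Suc (k - Suc i)" by simp
      have ik: "i \<le> k" using True by simp
      from Suc.hyps have IH: "(dlt ^^ i) (\<lambda>t. int_binom t k) = (\<lambda>t. int_binom t (k - i))"
        by (simp only: ik if_True)
      have "(dlt ^^ Suc i) (\<lambda>t. int_binom t k) t = dlt ((dlt ^^ i) (\<lambda>t. int_binom t k)) t"
        by (simp only: funpow.simps comp_apply)
      also have "\<dots> = int_binom (t + 1) (k - i) - int_binom t (k - i)"
        by (simp only: IH dlt_apply)
      finally have "(dlt ^^ Suc i) (\<lambda>t. int_binom t k) t = int_binom (t + 1) (k - i) - int_binom t (k - i)" .
      then show ?thesis using True \<open>k - i = Suc (k - Suc i)\<close> by (simp add: int_binom_Suc_Suc)
    next
      case False
      have "(dlt ^^ Suc i) (\<lambda>t. int_binom t k) t = dlt ((dlt ^^ i) (\<lambda>t. int_binom t k)) t"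
        by (simp only: funpow.simps comp_apply)
      also have "\<dots> = dlt (\<lambda>t. if i \<le> k then int_binom t (k - i) else 0) t"
        by (simp only: Suc.hyps)
      also have "\<dots> = 0" using False by (cases "i \<le> k") (simp_all add: dlt_apply)
      finally show ?thesis using False by simp
    qed
  qed
qed



lemma sum_split_ends:
  fixes f :: "nat \<Rightarrow> int"
  assumes "1 \<le> q"
  shows "(\<Sum>i\<le>q. f i) = f 0 + f q + (\<Sum>i\<in>{1..<q}. f i)"
proof -
  have "{..q} = insert 0 (insert q {1..<q})" using assms by auto
  moreover have "0 \<notin> insert q {1..<q}" using assms by auto
  ultimately show ?thesis using assms by (simp add: algebra_simps)
qed

lemma nilpotent:
  fixes p :: nat and h :: "int \<Rightarrow> int"
  assumes p: "prime p" and per: "\<forall>t. h (t + int (p ^ e)) = h t"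
  shows "r * p ^ e \<le> k \<Longrightarrow> int p ^ r dvd (dlt ^^ k) h t"
proof (induct r arbitrary: k t)
  case 0 then show ?case by simp
next
  case (Suc r)
  define q where "q = p ^ e"
  have q1: "1 \<le> q" using p by (simp add: q_def prime_gt_0_nat Suc_leI)
  define h' where "h' = (dlt ^^ (k - q)) h"
  have kq: "q \<le> k" using Suc.prems by (simp add: q_def)
  have per': "\<forall>t. h' (t + int q) = h' t" unfolding h'_def using dlt_periodic[OF per] by (simp add: q_def)
  have hi: "(dlt ^^ i) h' = (dlt ^^ (i + (k - q))) h" for i
    unfolding h'_def funpow_add by simp
  have "h' t = h' (t + int q)" using per' by simp
  also have "\<dots> = (\<Sum>i\<le>q. int (q choose i) * (dlt ^^ i) h' t)" by (rule newton)
  also have "\<dots> = h' t + (dlt ^^ q) h' t + (\<Sum>i\<in>{1..<q}. int (q choose i) * (dlt ^^ i) h' t)"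
    using sum_split_ends[OF q1] by simp
  finally have eq: "(dlt ^^ q) h' t = - (\<Sum>i\<in>{1..<q}. int (q choose i) * (dlt ^^ i) h' t)" by simp
  have "int p ^ Suc r dvd (\<Sum>i\<in>{1..<q}. int (q choose i) * (dlt ^^ i) h' t)"
  proof (rule dvd_sum)
    fix i assume i: "i \<in> {1..<q}"
    have "p ^ 1 dvd (p ^ e choose i)"
      by (rule binom_prime_power_dvd[OF p, of i e]) (use i in \<open>auto simp: q_def\<close>)
    then have d1: "int p dvd int (q choose i)" by (simp add: q_def)
    have "r * p ^ e \<le> i + (k - q)" using Suc.prems kq by (simp add: q_def)
    then have d2: "int p ^ r dvd (dlt ^^ i) h' t" using Suc.hyps hi by simp
    show "int p ^ Suc r dvd int (q choose i) * (dlt ^^ i) h' t"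
      using mult_dvd_mono[OF d1 d2] by simp
  qed
  then have "int p ^ Suc r dvd (dlt ^^ q) h' t" using eq by simp
  moreover have "(dlt ^^ q) h' = (dlt ^^ k) h" using hi[of q] kq by simp
  ultimately show ?case by simp
qed

lemma binom_shift_cong:
  fixes p :: nat
  assumes p: "prime p" and k: "k < p ^ K" and MKN: "M + K \<le> N + 1"
  shows "int p ^ M dvd int_binom (x + int (p ^ N)) k - int_binom x k"
proof -
  obtain m where m: "p ^ N = Suc m" using p by (metis gr0_implies_Suc prime_gt_0_nat zero_less_power)
  define f where "f = (\<lambda>i. int (p ^ N choose i) * (if i \<le> k then int_binom x (k - i) else 0))"
  have "int_binom (x + int (p ^ N)) k = (\<Sum>i\<le>p ^ N. f i)"
    using newton[of "\<lambda>t. int_binom t k" x "p ^ N"] by (simp add: dlt_binom f_def)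
  also have "\<dots> = f 0 + (\<Sum>i\<le>m. f (Suc i))" by (simp only: m sum.atMost_Suc_shift)
  finally have e: "int_binom (x + int (p ^ N)) k - int_binom x k = (\<Sum>i\<le>m. f (Suc i))"
    by (simp add: f_def)
  have "int p ^ M dvd (\<Sum>i\<le>m. f (Suc i))"
  proof (rule dvd_sum)
    fix i assume "i \<in> {..m}"
    show "int p ^ M dvd f (Suc i)"
    proof (cases "Suc i \<le> k")
      case True
      then have "p ^ M dvd (p ^ N choose Suc i)"
        using binom_prime_power_dvd[OF p, of "Suc i" K M N] k MKN by simp
      then have "int p ^ M dvd int (p ^ N choose Suc i)" by (metis of_nat_dvd_iff of_nat_power)
      then show ?thesis by (simp add: f_def True)
    qed (simp add: f_def)
  qed
  then show ?thesis using e by simp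
qed



lemma per_dvd:
  fixes P :: "int \<Rightarrow> int"
  assumes "\<And>t. m dvd P (t + T) - P t"
  shows "m dvd P (t + T * int L) - P t"
proof (induct L)
  case 0 then show ?case by simp
next
  case (Suc L)
  have "P (t + T * int (Suc L)) - P t = (P ((t + T * int L) + T) - P (t + T * int L)) + (P (t + T * int L) - P t)"
    by (simp add: algebra_simps)
  also have "m dvd \<dots>" by (rule dvd_add[OF assms[of "t + T * int L"] Suc])
  finally show ?case .
qed

lemma poly_period:
  fixes p :: nat and c :: "nat \<Rightarrow> int"
  assumes p: "prime p" and MKN: "M + K \<le> N + 1"
  shows "int p ^ M dvd (\<Sum>k<K. c k * int_binom (t + int (p ^ N)) k) - (\<Sum>k<K. c k * int_binom t k)"
proof -
  have "(\<Sum>k<K. c k * int_binom (t + int (p ^ N)) k) - (\<Sum>k<K. c k * int_binom t k)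
        = (\<Sum>k<K. c k * (int_binom (t + int (p ^ N)) k - int_binom t k))"
    by (simp add: sum_subtractf algebra_simps)
  also have "int p ^ M dvd \<dots>"
  proof (rule dvd_sum)
    fix k assume "k \<in> {..<K}"
    then have "k < 2 ^ K" using less_exp[of K] by (meson lessThan_iff less_trans)
    also have "2 ^ K \<le> p ^ K" using p by (simp add: power_mono prime_ge_2_nat)
    finally have "k < p ^ K" .
    then show "int p ^ M dvd c k * (int_binom (t + int (p ^ N)) k - int_binom t k)"
      using binom_shift_cong[OF p _ MKN] by simp
  qed
  finally show ?thesis .
qed

lemma univ_delta:
  fixes p :: nat and a :: int
  assumes p: "prime p"
  shows "\<exists>K c. \<forall>t::int. int p ^ M dvd
           (\<Sum>k<K. c k * int_binom t k) - (if t mod int (p ^ e) = a mod int (p ^ e) then 1 else 0)"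
proof -
  define q where "q = p ^ e"
  define g where "g = (\<lambda>t::int. if t mod int q = a mod int q then 1 else (0::int))"
  have gper: "\<forall>t. g (t + int q) = g t" by (simp add: g_def)
  define c where "c = (\<lambda>k. (dlt ^^ k) g 0)"
  define K where "K = M * q"
  define P where "P = (\<lambda>t. \<Sum>k<K. c k * int_binom t k)"
  have nonneg: "int p ^ M dvd P (int n) - g (int n)" for n
  proof -
    define U where "U = n + K"
    have "g (int n) = g (0 + int n)" by simp
    also have "\<dots> = (\<Sum>i\<le>n. int (n choose i) * c i)" unfolding c_def by (rule newton)
    also have "\<dots> = (\<Sum>i\<le>U. int (n choose i) * c i)"
      by (rule sum.mono_neutral_left) (auto simp: U_def)
    finally have e1: "g (int n) = (\<Sum>i\<le>U. int (n choose i) * c i)" .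
    have "P (int n) = (\<Sum>k<K. int (n choose k) * c k)" by (simp add: P_def int_binom_nat mult.commute)
    also have "\<dots> = (\<Sum>i\<le>U. if i < K then int (n choose i) * c i else 0)"
      by (subst sum.If_cases) (auto simp: U_def intro!: sum.cong)
    finally have e2: "P (int n) = (\<Sum>i\<le>U. if i < K then int (n choose i) * c i else 0)" .
    have "P (int n) - g (int n) = (\<Sum>i\<le>U. (if i < K then int (n choose i) * c i else 0) - int (n choose i) * c i)"
      using e1 e2 by (simp add: sum_subtractf)
    also have "int p ^ M dvd \<dots>"
    proof (rule dvd_sum)
      fix i assume "i \<in> {..U}"
      show "int p ^ M dvd (if i < K then int (n choose i) * c i else 0) - int (n choose i) * c i"
      proof (cases "i < K")
        case False
        then have "M * p ^ e \<le> i" by (simp add: K_def q_def)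
        then have "int p ^ M dvd c i" unfolding c_def
          using nilpotent[OF p, of g e M i 0] gper by (simp add: q_def)
        then show ?thesis using False by simp
      qed simp
    qed
    finally show ?thesis .
  qed
  have "int p ^ M dvd P t - g t" for t
  proof -
    define N where "N = M + K + e"
    define L where "L = nat (- t)"
    have pN: "int (p ^ N) \<ge> 1" using p by (simp add: prime_gt_0_nat Suc_leI)
    have "t + int (p ^ N) * int L \<ge> 0"
    proof (cases "t \<ge> 0")
      case True then show ?thesis by simp
    next
      case False
      then have "int (p ^ N) * int L \<ge> 1 * int L" using pN by (intro mult_right_mono) auto
      then show ?thesis using False by (simp add: L_def)
    qed
    then obtain n where n: "t + int (p ^ N) * int L = int n" by (metis nonneg_int_cases)
    have d1: "int p ^ M dvd P (t + int (p ^ N) * int L) - P t"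
      by (rule per_dvd) (unfold P_def, rule poly_period[OF p], simp add: N_def)
    have "int q dvd int (p ^ N) * int L"
      by (simp add: q_def N_def power_add)
    then have "g (t + int (p ^ N) * int L) = g t" unfolding g_def
      by (metis dvd_imp_mod_0 mod_add_left_eq add.right_neutral mod_add_right_eq)
    then have "P t - g t = (P (int n) - g (int n)) - (P (t + int (p ^ N) * int L) - P t)"
      using n by simp
    also have "int p ^ M dvd \<dots>" by (rule dvd_diff[OF nonneg[of n] d1])
    finally show ?thesis .
  qed
  then show ?thesis unfolding P_def g_def q_def by blast
qed



lemma intmul_card: "finite A \<Longrightarrow> intmul (int (card A)) b = (\<Sum>x\<in>A. b)"
proof (induct A rule: finite_induct)
  case empty then show ?case by simp
next
  case (insert x F)
  have "intmul (int (card (insert x F))) b = intmul (int (card F) + 1) b" using insert by (simp add: add.commute)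
  also have "\<dots> = intmul (int (card F)) b + b" by (rule intmul_succ)
  finally show ?case using insert by (simp add: add.commute)
qed

lemma intmul_card_UNIV: "intmul (int (card (UNIV :: 'b::{ab_group_add,finite} set))) (b::'b) = 0"
proof -
  have "(\<Sum>x\<in>(UNIV::'b set). x) = (\<Sum>x\<in>UNIV. x + b)"
    by (rule sum.reindex_bij_witness[of _ "\<lambda>x. x + b" "\<lambda>x. x - b"]) auto
  also have "\<dots> = (\<Sum>x\<in>UNIV. x) + (\<Sum>x\<in>(UNIV::'b set). b)" by (rule sum.distrib)
  finally have "(\<Sum>x\<in>(UNIV::'b set). b) = 0" by simp
  then show ?thesis using intmul_card[of "UNIV::'b set" b] by simp
qed

definition vm :: "nat \<Rightarrow> nat \<Rightarrow> nat" where "vm N p = p ^ multiplicity p N"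

definition Ecoef :: "nat \<Rightarrow> nat \<Rightarrow> int" where
  "Ecoef N p = (SOME E. int (vm N p) dvd E - 1 \<and> int (N div vm N p) dvd E)"

lemma vm_decomp:
  assumes "prime p" "N > 0"
  shows "N = vm N p * (N div vm N p)" "coprime (vm N p) (N div vm N p)" "\<not> p dvd (N div vm N p)"
proof -
  have nu: "\<not> is_unit p" using assms(1) not_prime_unit by blast
  show nd: "\<not> p dvd (N div vm N p)" unfolding vm_def
    using multiplicity_decompose[of N p] nu assms(2) by simp
  show "N = vm N p * (N div vm N p)" unfolding vm_def by (simp add: multiplicity_dvd)
  have "coprime p (N div vm N p)" using prime_imp_coprime[OF assms(1) nd] .
  then show "coprime (vm N p) (N div vm N p)" by (simp add: vm_def)
qed

lemma Ecoef_prop: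
  assumes "prime p" "N > 0"
  shows "int (vm N p) dvd Ecoef N p - 1" "int (N div vm N p) dvd Ecoef N p"
proof -
  have c: "coprime (int (vm N p)) (int (N div vm N p))" using vm_decomp[OF assms] by simp
  obtain u w where uw: "u * int (vm N p) + w * int (N div vm N p) = gcd (int (vm N p)) (int (N div vm N p))"
    using bezout_int by blast
  then have uw1: "u * int (vm N p) + w * int (N div vm N p) = 1" using c by simp
  have ex: "\<exists>E. int (vm N p) dvd E - 1 \<and> int (N div vm N p) dvd E"
  proof (intro exI conjI)
    show "int (vm N p) dvd w * int (N div vm N p) - 1"
    proof -
      have "w * int (N div vm N p) - 1 = - (u * int (vm N p))" using uw1 by linarith
      then show ?thesis by simp
    qed
    show "int (N div vm N p) dvd w * int (N div vm N p)" by simp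
  qed
  show "int (vm N p) dvd Ecoef N p - 1" "int (N div vm N p) dvd Ecoef N p"
    using someI_ex[OF ex] unfolding Ecoef_def by auto
qed

lemma prim_iff:
  fixes b :: "'b::{ab_group_add,finite}"
  assumes p: "prime p"
  shows "b \<in> prim p \<longleftrightarrow> intmul (int (vm (card (UNIV::'b set)) p)) b = 0"
proof
  assume "intmul (int (vm (card (UNIV::'b set)) p)) b = 0"
  then show "b \<in> prim p" by (auto simp: prim_def vm_def)
next
  assume "b \<in> prim p"
  then obtain k where k: "intmul (int (p ^ k)) b = 0" by (auto simp: prim_def)
  define N where "N = card (UNIV::'b set)"
  have N0: "N > 0" by (simp add: N_def card_gt_0_iff)
  define y where "y = N div vm N p"
  have Ny: "N = vm N p * y" using vm_decomp[OF p N0] by (simp add: y_def)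
  have "coprime p y" using prime_imp_coprime[OF p] vm_decomp(3)[OF p N0] by (simp add: y_def)
  then have "coprime (int (p ^ k)) (int y)" by simp
  then obtain u w where uw: "u * int (p ^ k) + w * int y = 1" using bezout_int[of "int (p^k)" "int y"] by auto
  have NI: "int N = int (vm N p) * int y" using Ny by (metis of_nat_mult)
  have "int (vm N p) = int (vm N p) * (u * int (p ^ k) + w * int y)" using uw by simp
  also have "\<dots> = (u * int (vm N p)) * int (p ^ k) + w * (int (vm N p) * int y)"
    by (simp only: distrib_left mult.assoc mult.left_commute)
  finally have "int (vm N p) = (u * int (vm N p)) * int (p ^ k) + w * int N" using NI by simp
  then have "intmul (int (vm N p)) b = intmul ((u * int (vm N p)) * int (p ^ k) + w * int N) b"
    by (rule arg_cong[where f = "\<lambda>z. intmul z b"])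
  also have "\<dots> = intmul (u * int (vm N p)) (intmul (int (p ^ k)) b) + intmul w (intmul (int N) b)"
    by (simp only: intmul_add intmul_mult)
  also have "\<dots> = 0" using k intmul_card_UNIV[of b] by (simp add: N_def)
  finally show "intmul (int (vm (card (UNIV::'b set)) p)) b = 0" by (simp add: N_def)
qed

lemma prim_0: "0 \<in> prim p" by (auto simp: prim_def intro: exI[of _ 0])

lemma prim_add:
  fixes a :: "'b::{ab_group_add,finite}"
  shows "prime p \<Longrightarrow> a \<in> prim p \<Longrightarrow> c \<in> prim p \<Longrightarrow> a + c \<in> prim p"
  by (simp add: prim_iff intmul_distrib)

lemma prim_intmul:
  fixes a :: "'b::{ab_group_add,finite}"
  shows "prime p \<Longrightarrow> a \<in> prim p \<Longrightarrow> intmul m a \<in> prim p"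
  by (simp add: prim_iff intmul_mult[symmetric] mult.commute) (simp add: intmul_mult)

lemma prim_sum:
  fixes f :: "_ \<Rightarrow> 'b::{ab_group_add,finite}"
  shows "prime p \<Longrightarrow> (\<And>i. i \<in> A \<Longrightarrow> f i \<in> prim p) \<Longrightarrow> (\<Sum>i\<in>A. f i) \<in> prim p"
  by (induct A rule: infinite_finite_induct) (auto simp: prim_0 prim_add)



definition goodps :: "nat list \<Rightarrow> nat \<Rightarrow> bool" where
  "goodps ps N \<longleftrightarrow> distinct ps \<and> (\<forall>p\<in>set ps. prime p) \<and> (\<forall>p. prime p \<and> p dvd N \<longrightarrow> p \<in> set ps)"

lemma card_UNIV_pos: "card (UNIV :: 'b::finite set) > 0" by (simp add: card_gt_0_iff)

lemma vm_dvd_other: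
  assumes g: "goodps ps N" and N0: "N > 0" and i: "i < length ps" and j: "j < length ps" and ij: "i \<noteq> j"
  shows "vm N (ps!j) dvd N div vm N (ps!i)"
proof -
  have pi: "prime (ps!i)" and pj: "prime (ps!j)" using g i j by (auto simp: goodps_def)
  have ne: "ps!i \<noteq> ps!j" using g i j ij by (auto simp: goodps_def nth_eq_iff_index_eq)
  have cop: "coprime (vm N (ps!j)) (vm N (ps!i))"
    using primes_coprime[OF pj pi] ne by (simp add: vm_def)
  have d: "vm N (ps!j) dvd N" by (simp add: vm_def multiplicity_dvd)
  have e: "(N div vm N (ps!i)) * vm N (ps!i) = N" using vm_decomp(1)[OF pi N0] by (simp add: mult.commute)
  have "vm N (ps!j) dvd (N div vm N (ps!i)) * vm N (ps!i)" using d by (simp only: e)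
  then show ?thesis using coprime_dvd_mult_left_iff[OF cop] by simp
qed

lemma E_kill:
  fixes c :: "'b::{ab_group_add,finite}"
  assumes g: "goodps ps (card (UNIV::'b set))" and i: "i < length ps" and j: "j < length ps" and ij: "i \<noteq> j"
    and c: "c \<in> prim (ps!j)"
  shows "intmul (Ecoef (card (UNIV::'b set)) (ps!i)) c = 0"
proof -
  define N where "N = card (UNIV::'b set)"
  have N0: "N > 0" by (simp add: N_def card_UNIV_pos)
  have pi: "prime (ps!i)" and pj: "prime (ps!j)" using g i j by (auto simp: goodps_def)
  have "int (vm N (ps!j)) dvd int (N div vm N (ps!i))"
    using vm_dvd_other[OF g[folded N_def] N0 i j ij] by simp
  also have "\<dots> dvd Ecoef N (ps!i)" using Ecoef_prop(2)[OF pi N0] .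
  finally obtain r where r: "Ecoef N (ps!i) = int (vm N (ps!j)) * r" by (rule dvdE)
  have "intmul (int (vm N (ps!j))) c = 0" using c prim_iff[OF pj, where b=c] by (simp add: N_def)
  moreover have "intmul (Ecoef N (ps!i)) c = intmul r (intmul (int (vm N (ps!j))) c)"
    by (simp only: r mult.commute[of "int (vm N (ps!j))" r] intmul_mult)
  ultimately show ?thesis by (simp add: N_def)
qed

lemma E_id:
  fixes c :: "'b::{ab_group_add,finite}"
  assumes p: "prime p" and c: "c \<in> prim p"
  shows "intmul (Ecoef (card (UNIV::'b set)) p) c = c"
proof -
  define N where "N = card (UNIV::'b set)"
  have N0: "N > 0" by (simp add: N_def card_UNIV_pos)
  have "intmul (Ecoef N p) c = intmul 1 c"
    by (rule intmul_cong[of "int (vm N p)"]) (use c prim_iff[OF p, where b=c] Ecoef_prop(1)[OF p N0] in \<open>simp_all add: N_def\<close>)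
  then show ?thesis by (simp add: N_def)
qed

lemma E_in_prim:
  fixes b :: "'b::{ab_group_add,finite}"
  assumes p: "prime p"
  shows "intmul (Ecoef (card (UNIV::'b set)) p) b \<in> prim p"
proof -
  define N where "N = card (UNIV::'b set)"
  have N0: "N > 0" by (simp add: N_def card_UNIV_pos)
  obtain r where r: "Ecoef N p = int (N div vm N p) * r" using Ecoef_prop(2)[OF p N0] by (rule dvdE)
  have NI: "int N = int (vm N p) * int (N div vm N p)"
    using arg_cong[where f=int, OF vm_decomp(1)[OF p N0]] by (simp only: of_nat_mult)
  have "int (vm N p) * Ecoef N p = r * int N"
    by (simp add: r NI algebra_simps)
  then have "intmul (int (vm N p)) (intmul (Ecoef N p) b) = 0"
    by (simp add: intmul_mult[symmetric] intmul_mult[of r] intmul_card_UNIV N_def)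
  then show ?thesis using prim_iff[OF p, where b="intmul (Ecoef N p) b"] by (simp add: N_def)
qed

lemma E_sum:
  fixes b :: "'b::{ab_group_add,finite}"
  assumes g: "goodps ps (card (UNIV::'b set))"
  shows "intmul (\<Sum>i<length ps. Ecoef (card (UNIV::'b set)) (ps!i)) b = b"
proof -
  define N where "N = card (UNIV::'b set)"
  have N0: "N > 0" by (simp add: N_def card_UNIV_pos)
  define X where "X = (\<Sum>i<length ps. Ecoef N (ps!i)) - 1"
  have vmX: "int (vm N (ps!i)) dvd X" if i: "i < length ps" for i
  proof -
    have pi: "prime (ps!i)" using g i by (auto simp: goodps_def)
    have "X = (Ecoef N (ps!i) - 1) + (\<Sum>j\<in>{..<length ps} - {i}. Ecoef N (ps!j))"
      unfolding X_def using i by (simp add: sum.remove)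
    also have "int (vm N (ps!i)) dvd \<dots>"
    proof (rule dvd_add)
      show "int (vm N (ps!i)) dvd Ecoef N (ps!i) - 1" by (rule Ecoef_prop(1)[OF pi N0])
      show "int (vm N (ps!i)) dvd (\<Sum>j\<in>{..<length ps} - {i}. Ecoef N (ps!j))"
      proof (rule dvd_sum)
        fix j assume j: "j \<in> {..<length ps} - {i}"
        have pj: "prime (ps!j)" using g j by (auto simp: goodps_def)
        have "int (vm N (ps!i)) dvd int (N div vm N (ps!j))"
          using vm_dvd_other[OF g[folded N_def] N0, of j i] j i by simp
        also have "\<dots> dvd Ecoef N (ps!j)" by (rule Ecoef_prop(2)[OF pj N0])
        finally show "int (vm N (ps!i)) dvd Ecoef N (ps!j)" .
      qed
    qed
    finally show ?thesis .
  qed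
  have "int N dvd X"
  proof (cases "X = 0")
    case False
    define Xn where "Xn = nat \<bar>X\<bar>"
    have Xn0: "Xn \<noteq> 0" using False by (simp add: Xn_def)
    have "N dvd Xn"
    proof (rule multiplicity_le_imp_dvd)
      show "N \<noteq> 0" using N0 by simp
      fix r :: nat assume r: "prime r"
      have nu: "\<not> is_unit r" using r not_prime_unit by blast
      show "multiplicity r N \<le> multiplicity r Xn"
      proof (cases "r \<in> set ps")
        case True
        then obtain i where i: "i < length ps" "ps!i = r" by (auto simp: in_set_conv_nth)
        have "int (vm N r) dvd X" using vmX[OF i(1)] i(2) by simp
        then have "vm N r dvd Xn" unfolding Xn_def by (simp only: dvd_nat_abs_iff)
        then show ?thesis using power_dvd_iff_le_multiplicity[of Xn r] Xn0 nu by (simp add: vm_def)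
      next
        case False
        then have "\<not> r dvd N" using g r by (auto simp: goodps_def N_def)
        then show ?thesis by (simp add: not_dvd_imp_multiplicity_0)
      qed
    qed
    then show ?thesis unfolding Xn_def by (simp only: dvd_nat_abs_iff)
  qed simp
  then have "intmul (\<Sum>i<length ps. Ecoef N (ps!i)) b = intmul 1 b"
    by (intro intmul_cong[of "int N"]) (simp_all add: X_def intmul_card_UNIV N_def)
  then show ?thesis by (simp add: N_def)
qed

lemma pproj_eq:
  fixes b :: "'b::{ab_group_add,finite}"
  assumes g: "goodps ps (card (UNIV::'b set))" and i: "i < length ps"
  shows "pproj ps i b = intmul (Ecoef (card (UNIV::'b set)) (ps!i)) b"
proof -
  define N where "N = card (UNIV::'b set)"
  define E where "E = (\<lambda>j. Ecoef N (ps!j))"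
  have pr: "\<And>j. j < length ps \<Longrightarrow> prime (ps!j)" using g by (auto simp: goodps_def)
  define cs0 where "cs0 = map (\<lambda>j. intmul (E j) b) [0..<length ps]"
  have ex: "\<exists>cs. length cs = length ps \<and> (\<forall>j<length ps. cs!j \<in> prim (ps!j)) \<and> sum_list cs = b \<and> intmul (E i) b = cs!i"
  proof (intro exI[of _ cs0] conjI allI impI)
    show "length cs0 = length ps" by (simp add: cs0_def)
    fix j assume "j < length ps"
    then show "cs0!j \<in> prim (ps!j)" using E_in_prim[OF pr] by (simp add: cs0_def E_def N_def)
  next
    have "sum_list cs0 = (\<Sum>j<length ps. intmul (E j) b)"
      by (simp add: cs0_def sum_list_sum_nth atLeast0LessThan)
    also have "\<dots> = b" using E_sum[OF g, of b] by (simp add: intmul_sum_left E_def N_def)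
    finally show "sum_list cs0 = b" .
  next
    show "intmul (E i) b = cs0 ! i" using i by (simp add: cs0_def)
  qed
  have uq: "c = intmul (E i) b" if H: "\<exists>cs. length cs = length ps \<and> (\<forall>j<length ps. cs!j \<in> prim (ps!j)) \<and> sum_list cs = b \<and> c = cs!i" for c
  proof -
    obtain cs where cs: "length cs = length ps" "\<forall>j<length ps. cs!j \<in> prim (ps!j)" "sum_list cs = b" "c = cs!i"
      using H by blast
    have "intmul (E i) b = (\<Sum>j<length ps. intmul (E i) (cs!j))"
      using cs(1,3) by (simp add: sum_list_sum_nth atLeast0LessThan intmul_sum_right[symmetric])
    also have "\<dots> = (\<Sum>j\<in>{i}. intmul (E i) (cs!j))"
    proof (rule sum.mono_neutral_right)
      show "\<forall>j\<in>{..<length ps} - {i}. intmul (E i) (cs!j) = 0"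
        using E_kill[OF g i] cs(2) by (auto simp: E_def N_def)
    qed (use i in auto)
    also have "\<dots> = cs!i" using E_id[OF pr[OF i], where c="cs!i"] cs(2) i by (simp add: E_def N_def)
    finally show ?thesis using cs(4) by simp
  qed
  have "pproj ps i b = intmul (E i) b"
    unfolding pproj_def
  proof (rule the_equality)
    show "\<exists>cs. length cs = length ps \<and> (\<forall>j<length ps. cs!j \<in> prim (ps!j)) \<and> sum_list cs = b \<and> intmul (E i) b = cs!i"
      by (rule ex)
  next
    fix c assume "\<exists>cs. length cs = length ps \<and> (\<forall>j<length ps. cs!j \<in> prim (ps!j)) \<and> sum_list cs = b \<and> c = cs!i"
    then show "c = intmul (E i) b" by (rule uq)
  qed
  then show ?thesis by (simp add: E_def N_def)
qed

lemma pproj_prim: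
  fixes b :: "'b::{ab_group_add,finite}"
  assumes g: "goodps ps (card (UNIV::'b set))" and i: "i < length ps"
  shows "pproj ps i b \<in> prim (ps!i)"
  using pproj_eq[OF g i, of b] E_in_prim[of "ps!i" b] g i by (auto simp: goodps_def)

lemma pproj_sum:
  fixes b :: "'b::{ab_group_add,finite}"
  assumes g: "goodps ps (card (UNIV::'b set))"
  shows "(\<Sum>i<length ps. pproj ps i b) = b"
  using E_sum[OF g, of b] by (simp add: pproj_eq[OF g] intmul_sum_left)



lemma off_0[simp]: "off Q 0 = 0" by (simp add: off_def)

lemma off_Cons_Suc[simp]: "off (a # Q) (Suc k) = length a + off Q k" by (simp add: off_def)

lemma off_Suc: "i < length Q \<Longrightarrow> off Q (Suc i) = off Q i + length (Q!i)"
  by (simp add: off_def take_Suc_conv_app_nth)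

lemma concat_split:
  assumes "i < length Q"
  shows "concat Q = concat (take i Q) @ Q!i @ concat (drop (Suc i) Q)" "length (concat (take i Q)) = off Q i"
proof -
  have "concat Q = concat (take i Q) @ concat (drop i Q)" by (metis append_take_drop_id concat_append)
  also have "drop i Q = Q!i # drop (Suc i) Q" using assms by (simp add: Cons_nth_drop_Suc)
  finally show "concat Q = concat (take i Q) @ Q!i @ concat (drop (Suc i) Q)" by simp
  show "length (concat (take i Q)) = off Q i" by (simp add: off_def length_concat)
qed

lemma off_bound: "i < length Q \<Longrightarrow> off Q i + length (Q!i) \<le> length (concat Q)"
  using concat_split[of i Q] by (metis le_add1 length_append add.assoc)

lemma off_mono: "i < k \<Longrightarrow> k \<le> length Q \<Longrightarrow> off Q i + length (Q!i) \<le> off Q k"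
proof -
  assume ik: "i < k" and k: "k \<le> length Q"
  have "take k Q = take (Suc i) Q @ take (k - Suc i) (drop (Suc i) Q)"
    using ik by (metis Suc_leI le_add_diff_inverse take_add)
  then have "off Q k = off Q (Suc i) + sum_list (map length (take (k - Suc i) (drop (Suc i) Q)))"
    by (simp add: off_def)
  then show ?thesis using off_Suc[of i Q] ik k by simp
qed

lemma blockvars_disjoint:
  "i < length Q \<Longrightarrow> k < length Q \<Longrightarrow> j \<in> blockvars Q i \<Longrightarrow> j \<in> blockvars Q k \<Longrightarrow> i = k"
proof (rule ccontr)
  assume i: "i < length Q" and k: "k < length Q" and ji: "j \<in> blockvars Q i" and jk: "j \<in> blockvars Q k" and ne: "i \<noteq> k"
  show False
  proof (cases "i < k")
    case True then show False using off_mono[of i k Q] k ji jk by (auto simp: blockvars_def)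
  next
    case False then have "k < i" using ne by simp
    then show False using off_mono[of k i Q] i ji jk by (auto simp: blockvars_def)
  qed
qed

lemma blockvars_exists: "j < length (concat Q) \<Longrightarrow> \<exists>k<length Q. j \<in> blockvars Q k"
proof (induct Q arbitrary: j)
  case Nil then show ?case by simp
next
  case (Cons a Q)
  show ?case
  proof (cases "j < length a")
    case True then show ?thesis by (intro exI[of _ 0]) (auto simp: blockvars_def)
  next
    case False
    then have "j - length a < length (concat Q)" using Cons.prems by simp
    then obtain k where "k < length Q" "j - length a \<in> blockvars Q k" using Cons.hyps by blast
    then show ?thesis using False by (intro exI[of _ "Suc k"]) (auto simp: blockvars_def)
  qed
qed

lemma concat_nth_block:
  assumes i: "i < length Q" and j: "j \<in> blockvars Q i"
  shows "concat Q ! j = Q!i!(j - off Q i)"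
proof -
  have "concat Q ! j = (concat (take i Q) @ Q!i @ concat (drop (Suc i) Q)) ! j"
    using concat_split(1)[OF i] by simp
  also have "\<dots> = Q!i!(j - off Q i)"
    using j concat_split(2)[OF i] by (auto simp: blockvars_def nth_append)
  finally show ?thesis .
qed

lemma length_blockx: "i < length Q \<Longrightarrow> length x = length (concat Q) \<Longrightarrow> length (blockx Q i x) = length (Q!i)"
  using off_bound[of i Q] by (simp add: blockx_def)

lemma blockx_upd_out:
  assumes "j \<notin> blockvars Q i"
  shows "blockx Q i (x[j := v]) = blockx Q i x"
proof (cases "j < off Q i")
  case True then show ?thesis by (simp add: blockx_def drop_update_cancel)
next
  case False
  then have "length (Q!i) \<le> j - off Q i" using assms by (auto simp: blockvars_def)
  then show ?thesis using False by (simp add: blockx_def drop_update_swap take_update_cancel)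
qed

lemma blockx_upd_in:
  assumes "j \<in> blockvars Q i"
  shows "blockx Q i (x[j := v]) = (blockx Q i x)[j - off Q i := v]"
  using assms by (simp add: blockx_def blockvars_def drop_update_swap take_update_swap)

lemma blockx_nth:
  assumes "j \<in> blockvars Q i" "j < length x"
  shows "blockx Q i x ! (j - off Q i) = x ! j"
  using assms by (auto simp: blockx_def blockvars_def)

definition padx :: "nat list list \<Rightarrow> nat \<Rightarrow> 'a::zero list \<Rightarrow> 'a list" where
  "padx Q i y = replicate (off Q i) 0 @ y @ replicate (length (concat Q) - off Q i - length (Q!i)) 0"

lemma length_padx: "i < length Q \<Longrightarrow> length y = length (Q!i) \<Longrightarrow> length (padx Q i y) = length (concat Q)"
  using off_bound[of i Q] by (simp add: padx_def)

lemma blockx_padx: "length y = length (Q!i) \<Longrightarrow> blockx Q i (padx Q i y) = y"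
  by (simp add: blockx_def padx_def)

lemma blockx_Arep:
  assumes i: "i < length Q" and x: "x \<in> Arep (concat Q)"
  shows "blockx Q i x \<in> Arep (Q!i)"
proof -
  have lx: "length x = length (concat Q)" using x by (simp add: Arep_def)
  have lb: "length (blockx Q i x) = length (Q!i)" by (rule length_blockx[OF i lx])
  show ?thesis unfolding Arep_def
  proof (intro CollectI conjI allI impI)
    show "length (blockx Q i x) = length (Q!i)" by (rule lb)
    fix j' assume j': "j' < length (Q!i)"
    define j where "j = off Q i + j'"
    have jb: "j \<in> blockvars Q i" using j' by (simp add: j_def blockvars_def)
    have jn: "j < length x" using off_bound[OF i] j' lx by (simp add: j_def)
    have e1: "blockx Q i x ! j' = x ! j" using blockx_nth[OF jb jn] by (simp add: j_def)
    have e2: "concat Q ! j = Q!i!j'" using concat_nth_block[OF i jb] by (simp add: j_def)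
    have "0 \<le> x!j \<and> x!j < int (concat Q ! j)" using x jn lx by (simp add: Arep_def)
    then show "0 \<le> blockx Q i x ! j'" "blockx Q i x ! j' < int (Q!i!j')" using e1 e2 by simp_all
  qed
qed



definition blk :: "nat list list \<Rightarrow> nat \<Rightarrow> 'a list \<Rightarrow> 'a list" where
  "blk Q i d = take (length (Q!i)) (drop (off Q i) d)"

lemma blockx_blk: "blockx Q i x = blk Q i x" by (simp add: blockx_def blk_def)

lemma blockC_pad: "blockC Q i C d' = (if length d' = length (Q!i) then C (padx Q i d') else 0)"
  by (simp add: blockC_def padx_def)

lemma length_blk: "i < length Q \<Longrightarrow> length d = length (concat Q) \<Longrightarrow> length (blk Q i d) = length (Q!i)"
  using off_bound[of i Q] by (simp add: blk_def)

lemma blk_nth: "j' < length (Q!i) \<Longrightarrow> off Q i \<le> length d \<Longrightarrow> blk Q i d ! j' = d ! (off Q i + j')"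
  by (simp add: blk_def)

lemma blk_padx: "length y = length (Q!i) \<Longrightarrow> blk Q i (padx Q i y) = y"
  by (simp add: blk_def padx_def)

lemma padx_nth:
  assumes i: "i < length Q" and ly: "length y = length (Q!i)" and j: "j < length (concat Q)"
  shows "padx Q i y ! j = (if j \<in> blockvars Q i then y ! (j - off Q i) else 0)"
  using off_bound[OF i] ly j by (auto simp: padx_def blockvars_def nth_append)

lemma padx_blk:
  assumes i: "i < length Q" and ld: "length d = length (concat Q)"
    and z: "\<forall>j<length d. j \<notin> blockvars Q i \<longrightarrow> d!j = (0::'a::zero)"
  shows "padx Q i (blk Q i d) = d"
proof (rule nth_equalityI)
  have lb: "length (blk Q i d) = length (Q!i)" by (rule length_blk[OF i ld])
  show "length (padx Q i (blk Q i d)) = length d" using length_padx[OF i lb] ld by simp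
  fix j assume "j < length (padx Q i (blk Q i d))"
  then have j: "j < length (concat Q)" using length_padx[OF i lb] by simp
  show "padx Q i (blk Q i d) ! j = d ! j"
  proof (cases "j \<in> blockvars Q i")
    case True
    then have "j - off Q i < length (Q!i)" "off Q i + (j - off Q i) = j" by (auto simp: blockvars_def)
    moreover have "off Q i \<le> length d" using off_bound[OF i] ld by simp
    ultimately show ?thesis using padx_nth[OF i lb j] True blk_nth[of "j - off Q i" Q i d] by simp
  next
    case False then show ?thesis using padx_nth[OF i lb j] z ld j by simp
  qed
qed

lemma padx_zero: "i < length Q \<Longrightarrow> length y = length (Q!i) \<Longrightarrow>
   \<forall>j<length (padx Q i y). j \<notin> blockvars Q i \<longrightarrow> padx Q i y ! j = (0::'a::zero)"
  using padx_nth length_padx by fastforce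

lemma mf_block:
  assumes i: "i < length Q" and lx: "length x = length (concat Q)" and ld: "length d = length (concat Q)"
    and z: "\<forall>j<length d. j \<notin> blockvars Q i \<longrightarrow> d!j = 0"
  shows "mf x d = mf (blockx Q i x) (blk Q i d)"
proof -
  define o' where "o' = off Q i"
  define L where "L = length (Q!i)"
  have bnd: "o' + L \<le> length x" using off_bound[OF i] lx by (simp add: o'_def L_def)
  have "mf x d = (\<Prod>j\<in>{o'..<o'+L}. int_binom (x!j) (d!j))"
    unfolding mf_def
  proof (rule prod.mono_neutral_right)
    show "finite {..<length x}" by simp
    show "{o'..<o'+L} \<subseteq> {..<length x}" using bnd by auto
    show "\<forall>j\<in>{..<length x} - {o'..<o'+L}. int_binom (x!j) (d!j) = 1"
      using z lx ld by (auto simp: blockvars_def o'_def L_def)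
  qed
  also have "\<dots> = (\<Prod>j'<L. int_binom (x!(o'+j')) (d!(o'+j')))"
  proof -
    have "{o'..<o'+L} = (\<lambda>j'. o' + j') ` {..<L}"
    proof (rule set_eqI)
      fix j show "j \<in> {o'..<o'+L} \<longleftrightarrow> j \<in> (\<lambda>j'. o' + j') ` {..<L}"
      proof
        assume "j \<in> {o'..<o'+L}"
        then show "j \<in> (\<lambda>j'. o' + j') ` {..<L}" by (intro image_eqI[of _ _ "j - o'"]) auto
      qed auto
    qed
    then show ?thesis by (simp add: prod.reindex)
  qed
  also have "\<dots> = mf (blockx Q i x) (blk Q i d)"
  proof -
    have a1: "off Q i \<le> length d" "off Q i \<le> length x" using bnd lx ld by (simp_all add: o'_def)
    have h1: "blockx Q i x ! j' = x ! (o' + j')" if "j' < L" for j'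
      using blk_nth[of j' Q i x] that a1 by (simp add: blockx_blk L_def o'_def)
    have h2: "blk Q i d ! j' = d ! (o' + j')" if "j' < L" for j'
      using blk_nth[of j' Q i d] that a1 by (simp add: L_def o'_def)
    have l1: "length (blockx Q i x) = L" using length_blockx[OF i lx] by (simp add: L_def)
    show ?thesis
      unfolding mf_def l1 by (rule prod.cong[OF refl]) (simp add: h1 h2)
  qed
  finally show ?thesis .
qed

lemma peval_block:
  fixes C :: "nat list \<Rightarrow> 'b::ab_group_add"
  assumes i: "i < length Q" and pf: "polyfract (length (concat Q)) C" and ob: "only_block Q i C"
    and lx: "length x = length (concat Q)"
  shows "peval C x = peval (blockC Q i C) (blockx Q i x)"
proof -
  define S where "S = {d. C d \<noteq> 0}"
  have fS: "finite S" and lS: "\<And>d. d \<in> S \<Longrightarrow> length d = length (concat Q)"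
    using pf by (auto simp: polyfract_def S_def)
  have zS: "\<And>d. d \<in> S \<Longrightarrow> \<forall>j<length d. j \<notin> blockvars Q i \<longrightarrow> d!j = 0"
    using ob by (auto simp: only_block_def S_def)
  have pb: "\<And>d. d \<in> S \<Longrightarrow> padx Q i (blk Q i d) = d" using padx_blk[OF i] lS zS by blast
  have inj: "inj_on (blk Q i) S" by (rule inj_on_inverseI[where g="padx Q i"]) (rule pb)
  have sup: "{d'. blockC Q i C d' \<noteq> 0} \<subseteq> blk Q i ` S"
  proof
    fix d' assume "d' \<in> {d'. blockC Q i C d' \<noteq> 0}"
    then have l: "length d' = length (Q!i)" and c: "C (padx Q i d') \<noteq> 0" by (auto simp: blockC_pad split: if_splits)
    show "d' \<in> blk Q i ` S"
    proof (rule image_eqI)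
      show "d' = blk Q i (padx Q i d')" using blk_padx[OF l] by simp
      show "padx Q i d' \<in> S" using c by (simp add: S_def)
    qed
  qed
  have "peval (blockC Q i C) (blockx Q i x) = (\<Sum>d'\<in>blk Q i ` S. intmul (mf (blockx Q i x) d') (blockC Q i C d'))"
    by (rule peval_superset[OF finite_imageI[OF fS] sup])
  also have "\<dots> = (\<Sum>d\<in>S. intmul (mf (blockx Q i x) (blk Q i d)) (blockC Q i C (blk Q i d)))"
    by (rule sum.reindex[OF inj, unfolded comp_def])
  also have "\<dots> = (\<Sum>d\<in>S. intmul (mf x d) (C d))"
  proof (rule sum.cong[OF refl])
    fix d assume d: "d \<in> S"
    have "blockC Q i C (blk Q i d) = C d"
      using length_blk[OF i lS[OF d]] pb[OF d] by (simp add: blockC_pad)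
    moreover have "mf x d = mf (blockx Q i x) (blk Q i d)" by (rule mf_block[OF i lx lS[OF d] zS[OF d]])
    ultimately show "intmul (mf (blockx Q i x) (blk Q i d)) (blockC Q i C (blk Q i d)) = intmul (mf x d) (C d)"
      by simp
  qed
  also have "\<dots> = peval C x" by (simp add: peval_mf S_def)
  finally show ?thesis by simp
qed

definition embedC :: "nat list list \<Rightarrow> nat \<Rightarrow> (nat list \<Rightarrow> 'b::zero) \<Rightarrow> nat list \<Rightarrow> 'b" where
  "embedC Q i D = (\<lambda>d. if length d = length (concat Q) \<and> (\<forall>j<length d. j \<notin> blockvars Q i \<longrightarrow> d!j = 0)
                        then D (blk Q i d) else 0)"

lemma embedC_props:
  fixes D :: "nat list \<Rightarrow> 'b::ab_group_add"
  assumes i: "i < length Q" and pf: "polyfract (length (Q!i)) D"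
  shows "polyfract (length (concat Q)) (embedC Q i D)" "only_block Q i (embedC Q i D)"
    "blockC Q i (embedC Q i D) = D"
proof -
  have sub: "{d. embedC Q i D d \<noteq> 0} \<subseteq> padx Q i ` {d. D d \<noteq> 0}"
  proof
    fix d assume "d \<in> {d. embedC Q i D d \<noteq> 0}"
    then have l: "length d = length (concat Q)" and z: "\<forall>j<length d. j \<notin> blockvars Q i \<longrightarrow> d!j = 0"
      and c: "D (blk Q i d) \<noteq> 0" by (auto simp: embedC_def split: if_splits)
    show "d \<in> padx Q i ` {d. D d \<noteq> 0}"
    proof (rule image_eqI)
      show "d = padx Q i (blk Q i d)" using padx_blk[OF i l z] by simp
      show "blk Q i d \<in> {d. D d \<noteq> 0}" using c by simp
    qed
  qed
  have "finite {d. embedC Q i D d \<noteq> 0}"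
    using pf by (intro finite_subset[OF sub] finite_imageI) (simp add: polyfract_def)
  then show "polyfract (length (concat Q)) (embedC Q i D)"
    by (simp add: polyfract_def embedC_def)
  show "only_block Q i (embedC Q i D)"
    by (simp add: only_block_def embedC_def)
  show "blockC Q i (embedC Q i D) = D"
  proof (rule ext)
    fix d'
    show "blockC Q i (embedC Q i D) d' = D d'"
    proof (cases "length d' = length (Q!i)")
      case True
      then show ?thesis using length_padx[OF i True] padx_zero[OF i True] blk_padx[OF True]
        by (simp add: blockC_pad embedC_def)
    next
      case False
      then have "D d' = 0" using pf by (auto simp: polyfract_def)
      then show ?thesis using False by (simp add: blockC_pad)
    qed
  qed
qed

lemma peval_embedC:
  fixes D :: "nat list \<Rightarrow> 'b::ab_group_add"
  assumes i: "i < length Q" and pf: "polyfract (length (Q!i)) D" and lx: "length x = length (concat Q)"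
  shows "peval (embedC Q i D) x = peval D (blockx Q i x)"
  using peval_block[OF i embedC_props(1,2)[OF i pf] lx] embedC_props(3)[OF i pf] by simp



lemma per_from_blocks:
  fixes F :: "int list \<Rightarrow> 'b::ab_group_add" and hs :: "nat \<Rightarrow> int list \<Rightarrow> 'b"
  assumes F: "\<And>x. length x = length (concat Q) \<Longrightarrow> F x = (\<Sum>i<length Q. hs i (blockx Q i x))"
    and H: "\<And>i y j'. i < length Q \<Longrightarrow> length y = length (Q!i) \<Longrightarrow> j' < length (Q!i) \<Longrightarrow>
              hs i (y[j' := y!j' + int (Q!i!j')]) = hs i y"
    and lx: "length x = length (concat Q)" and j: "j < length (concat Q)"
  shows "F (x[j := x!j + int (concat Q ! j)]) = F x"
proof -
  obtain k where k: "k < length Q" "j \<in> blockvars Q k" using blockvars_exists[OF j] by blast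
  define x' where "x' = x[j := x!j + int (concat Q ! j)]"
  have lx': "length x' = length (concat Q)" using lx by (simp add: x'_def)
  have "F x' = (\<Sum>i<length Q. hs i (blockx Q i x'))" by (rule F[OF lx'])
  also have "\<dots> = (\<Sum>i<length Q. hs i (blockx Q i x))"
  proof (rule sum.cong[OF refl])
    fix i assume i: "i \<in> {..<length Q}"
    show "hs i (blockx Q i x') = hs i (blockx Q i x)"
    proof (cases "i = k")
      case False
      then have "j \<notin> blockvars Q i" using blockvars_disjoint[of i Q k j] i k by auto
      then show ?thesis by (simp add: x'_def blockx_upd_out)
    next
      case True
      define j' where "j' = j - off Q k"
      have j': "j' < length (Q!k)" using k(2) by (auto simp: blockvars_def j'_def)
      have ly: "length (blockx Q k x) = length (Q!k)" by (rule length_blockx[OF k(1) lx])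
      have "blockx Q k x' = (blockx Q k x)[j' := x!j + int (concat Q ! j)]"
        by (simp add: x'_def blockx_upd_in[OF k(2)] j'_def)
      also have "x!j = blockx Q k x ! j'" using blockx_nth[OF k(2)] j lx by (simp add: j'_def)
      also have "concat Q ! j = Q!k!j'" using concat_nth_block[OF k] by (simp add: j'_def)
      finally have "blockx Q k x' = (blockx Q k x)[j' := blockx Q k x ! j' + int (Q!k!j')]" .
      then show ?thesis using H[OF k(1) ly j'] True by simp
    qed
  qed
  also have "\<dots> = F x" by (rule F[OF lx, symmetric])
  finally show ?thesis by (simp add: x'_def)
qed

lemma peval_p_period:
  fixes C :: "nat list \<Rightarrow> 'b::ab_group_add" and p :: nat
  assumes p: "prime p" and pf: "polyfract n C" and kill: "\<And>d. intmul (int (p ^ M)) (C d) = 0" and j: "j < n"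
  shows "\<exists>N. \<forall>x. length x = n \<longrightarrow> peval C (x[j := x!j + int (p ^ N)]) = peval C x"
proof -
  define S where "S = {d. C d \<noteq> 0}"
  have fS: "finite S" using pf by (simp add: polyfract_def S_def)
  define K where "K = (\<Sum>d\<in>S. Suc (d!j))"
  have dK: "d!j < p ^ K" if "d \<in> S" for d
  proof -
    have "Suc (d!j) \<le> K" unfolding K_def by (rule member_le_sum[OF that]) (use fS in auto)
    also have "K < 2 ^ K" by (rule less_exp)
    also have "2 ^ K \<le> p ^ K" using p by (simp add: power_mono prime_ge_2_nat)
    finally show ?thesis by simp
  qed
  define N where "N = M + K"
  have "\<forall>x. length x = n \<longrightarrow> peval C (x[j := x!j + int (p ^ N)]) = peval C x"
  proof (intro allI impI)
    fix x :: "int list" assume lx: "length x = n"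
    have jx: "j < length x" using j lx by simp
    show "peval C (x[j := x!j + int (p ^ N)]) = peval C x"
      unfolding peval_mf S_def[symmetric]
    proof (rule sum.cong[OF refl])
      fix d assume d: "d \<in> S"
      have e1: "mf (x[j := x!j + int (p ^ N)]) d = int_binom (x!j + int (p ^ N)) (d!j) * mfr x d j"
        using mf_split[of j "x[j := x!j + int (p ^ N)]" d] jx by (simp add: mfr_upd_x)
      have e2: "mf x d = int_binom (x!j) (d!j) * mfr x d j" using mf_split[of j x d] jx by simp
      have "int p ^ M dvd int_binom (x!j + int (p ^ N)) (d!j) - int_binom (x!j) (d!j)"
        by (rule binom_shift_cong[OF p dK[OF d]]) (simp add: N_def)
      then have "int (p ^ M) dvd mf (x[j := x!j + int (p ^ N)]) d - mf x d"
        unfolding e1 e2 by (simp add: left_diff_distrib[symmetric])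
      then show "intmul (mf (x[j := x!j + int (p ^ N)]) d) (C d) = intmul (mf x d) (C d)"
        by (rule intmul_cong[OF kill])
    qed
  qed
  then show ?thesis by blast
qed

lemma intmul_period:
  fixes h :: "int \<Rightarrow> 'c"
  assumes "\<And>t. h (t + a) = h t"
  shows "h (t + a * s) = h t"
proof (induct s arbitrary: t rule: int_induct[where k=0])
  case base then show ?case by simp
next
  case (step1 i)
  have "h (t + a * (i + 1)) = h ((t + a * i) + a)" by (simp add: algebra_simps)
  also have "\<dots> = h t" using assms step1 by simp
  finally show ?case .
next
  case (step2 i)
  have "h (t + a * (i - 1)) = h ((t + a * (i - 1)) + a)" by (rule assms[symmetric])
  also have "(t + a * (i - 1)) + a = t + a * i" by (simp add: algebra_simps)
  also have "h (t + a * i) = h t" using step2 by blast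
  finally show ?case .
qed

lemma period_one:
  fixes h :: "int \<Rightarrow> 'c"
  assumes a: "\<And>t. h (t + a) = h t" and b: "\<And>t. h (t + b) = h t" and c: "coprime a b"
  shows "h (t + 1) = h t"
proof -
  obtain u w where uw: "u * a + w * b = gcd a b" using bezout_int by blast
  then have uw1: "a * u + b * w = 1" using c by (simp add: mult.commute)
  have "h (t + 1) = h ((t + a * u) + b * w)" using uw1 by (simp add: add.assoc)
  also have "\<dots> = h (t + a * u)" by (rule intmul_period[of h b, OF b])
  also have "\<dots> = h t" by (rule intmul_period[of h a, OF a])
  finally show ?thesis .
qed

lemma blockC_polyfract:
  fixes C :: "nat list \<Rightarrow> 'b::ab_group_add"
  assumes pf: "polyfract (length (concat Q)) C"
  shows "polyfract (length (Q!i)) (blockC Q i C)"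
proof -
  have sup: "{d'. blockC Q i C d' \<noteq> 0} \<subseteq> blk Q i ` {d. C d \<noteq> 0}"
  proof
    fix d' assume "d' \<in> {d'. blockC Q i C d' \<noteq> 0}"
    then have l: "length d' = length (Q!i)" and c: "C (padx Q i d') \<noteq> 0" by (auto simp: blockC_pad split: if_splits)
    show "d' \<in> blk Q i ` {d. C d \<noteq> 0}"
    proof (rule image_eqI)
      show "d' = blk Q i (padx Q i d')" using blk_padx[OF l] by simp
      show "padx Q i d' \<in> {d. C d \<noteq> 0}" using c by simp
    qed
  qed
  have "finite {d'. blockC Q i C d' \<noteq> 0}"
    using pf by (intro finite_subset[OF sup] finite_imageI) (simp add: polyfract_def)
  then show ?thesis by (simp add: polyfract_def blockC_pad)
qed

lemma padx_upd: "j' < length y \<Longrightarrow> padx Q i (y[j' := v]) = (padx Q i y)[off Q i + j' := v]"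
  by (simp add: padx_def list_update_append)

lemma padx_nth_in: "j' < length y \<Longrightarrow> padx Q i y ! (off Q i + j') = y ! j'"
  by (simp add: padx_def nth_append)

lemma blockC_periodic:
  fixes C :: "nat list \<Rightarrow> 'b::ab_group_add"
  assumes i: "i < length Q" and pf: "polyfract (length (concat Q)) C" and ob: "only_block Q i C"
    and per: "\<And>x j. length x = length (concat Q) \<Longrightarrow> j < length (concat Q) \<Longrightarrow>
                peval C (x[j := x!j + int (concat Q ! j)]) = peval C x"
  shows "periodic_pf (Q!i) (blockC Q i C)"
  unfolding periodic_pf_def
proof (intro conjI allI impI)
  show "polyfract (length (Q!i)) (blockC Q i C)" by (rule blockC_polyfract[OF pf])
  fix y :: "int list" and j' assume ly: "length y = length (Q!i)" and j': "j' < length (Q!i)"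
  define j where "j = off Q i + j'"
  have jb: "j \<in> blockvars Q i" using j' by (simp add: j_def blockvars_def)
  have jn: "j < length (concat Q)" using off_bound[OF i] j' by (simp add: j_def)
  have lp: "length (padx Q i y) = length (concat Q)" by (rule length_padx[OF i ly])
  define y' where "y' = y[j' := y!j' + int (Q!i!j')]"
  have ly': "length y' = length (Q!i)" using ly by (simp add: y'_def)
  have lp': "length (padx Q i y') = length (concat Q)" by (rule length_padx[OF i ly'])
  have "peval (blockC Q i C) y' = peval C (padx Q i y')"
    using peval_block[OF i pf ob lp'] blockx_padx[OF ly'] by simp
  also have "padx Q i y' = (padx Q i y)[j := padx Q i y ! j + int (concat Q ! j)]"
    using padx_upd[of j' y Q i] padx_nth_in[of j' y Q i] concat_nth_block[OF i jb] j' ly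
    by (simp add: y'_def j_def)
  also have "peval C \<dots> = peval C (padx Q i y)" by (rule per[OF lp jn])
  also have "\<dots> = peval (blockC Q i C) y"
    using peval_block[OF i pf ob lp] blockx_padx[OF ly] by simp
  finally show "peval (blockC Q i C) (y[j' := y!j' + int (Q!i!j')]) = peval (blockC Q i C) y"
    by (simp add: y'_def)
qed



definition box :: "nat \<Rightarrow> nat \<Rightarrow> nat list set" where
  "box n K = {d. length d = n \<and> (\<forall>j<n. d!j < K)}"

lemma box_finite: "finite (box n K)"
proof -
  have "box n K \<subseteq> {d. set d \<subseteq> {..<K} \<and> length d = n}"
    by (auto simp: box_def in_set_conv_nth)
  moreover have "finite {d. set d \<subseteq> {..<K} \<and> length d = n}" by (rule finite_lists_length_eq) simp
  ultimately show ?thesis by (rule finite_subset)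
qed

lemma box_Suc: "box (Suc n) K = (\<lambda>(k, d). k # d) ` ({..<K} \<times> box n K)"
proof (rule set_eqI)
  fix d
  show "d \<in> box (Suc n) K \<longleftrightarrow> d \<in> (\<lambda>(k, d). k # d) ` ({..<K} \<times> box n K)"
  proof
    assume d: "d \<in> box (Suc n) K"
    then obtain k d' where kd: "d = k # d'" by (cases d) (auto simp: box_def)
    have "k < K" "d' \<in> box n K" using d kd by (auto simp: box_def)
    then show "d \<in> (\<lambda>(k, d). k # d) ` ({..<K} \<times> box n K)" using kd by force
  next
    assume "d \<in> (\<lambda>(k, d). k # d) ` ({..<K} \<times> box n K)"
    then obtain k d' where "d = k # d'" "k < K" "d' \<in> box n K" by auto
    then show "d \<in> box (Suc n) K" by (auto simp: box_def nth_Cons split: nat.splits)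
  qed
qed

lemma box_sum:
  fixes w :: "nat \<Rightarrow> nat \<Rightarrow> int"
  shows "(\<Sum>d\<in>box n K. \<Prod>j<n. w j (d!j)) = (\<Prod>j<n. \<Sum>k<K. w j k)"
proof (induct n arbitrary: w)
  case 0
  have "box 0 K = {[]}" by (auto simp: box_def)
  then show ?case by simp
next
  case (Suc n)
  have inj: "inj_on (\<lambda>(k, d). k # d) ({..<K} \<times> box n K)" by (auto simp: inj_on_def)
  have "(\<Sum>d\<in>box (Suc n) K. \<Prod>j<Suc n. w j (d!j))
      = (\<Sum>kd\<in>{..<K} \<times> box n K. (\<lambda>d. \<Prod>j<Suc n. w j (d!j)) (fst kd # snd kd))"
    unfolding box_Suc by (subst sum.reindex[OF inj]) (simp add: case_prod_beta)
  also have "\<dots> = (\<Sum>kd\<in>{..<K} \<times> box n K. w 0 (fst kd) * (\<Prod>j<n. w (Suc j) (snd kd ! j)))"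
    by (simp del: prod.lessThan_Suc add: prod.lessThan_Suc_shift)
  also have "\<dots> = (\<Sum>k<K. \<Sum>d\<in>box n K. w 0 k * (\<Prod>j<n. w (Suc j) (d ! j)))"
    by (simp add: sum.cartesian_product case_prod_beta)
  also have "\<dots> = (\<Sum>k<K. w 0 k) * (\<Sum>d\<in>box n K. \<Prod>j<n. w (Suc j) (d ! j))"
    by (simp add: sum_product)
  also have "\<dots> = (\<Sum>k<K. w 0 k) * (\<Prod>j<n. \<Sum>k<K. w (Suc j) k)"
    using Suc[of "\<lambda>j. w (Suc j)"] by simp
  also have "\<dots> = (\<Prod>j<Suc n. \<Sum>k<K. w j k)" by (simp del: prod.lessThan_Suc add: prod.lessThan_Suc_shift)
  finally show ?case .
qed

lemma prod_dvd_diff: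
  fixes f g :: "'a \<Rightarrow> int"
  shows "(\<And>j. j \<in> A \<Longrightarrow> m dvd f j - g j) \<Longrightarrow> m dvd prod f A - prod g A"
proof (induct A rule: infinite_finite_induct)
  case (insert a A)
  have "prod f (insert a A) - prod g (insert a A) = f a * (prod f A - prod g A) + (f a - g a) * prod g A"
    using insert by (simp add: algebra_simps)
  also have "m dvd \<dots>"
  proof -
    have d1: "m dvd prod f A - prod g A" using insert by simp
    have d2: "m dvd f a - g a" using insert.prems by simp
    show ?thesis by (rule dvd_add[OF dvd_mult[OF d1] dvd_mult2[OF d2]])
  qed
  finally show ?case .
qed simp_all

lemma univ_delta2:
  fixes p :: nat and a :: int
  assumes p: "prime p"
  shows "\<exists>c K. (\<forall>k\<ge>K. c k = 0) \<and> (\<forall>t::int. int p ^ M dvd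
           (\<Sum>k<K. c k * int_binom t k) - (if t mod int (p ^ e) = a mod int (p ^ e) then 1 else 0))"
proof -
  obtain K c where h: "\<forall>t::int. int p ^ M dvd
           (\<Sum>k<K. c k * int_binom t k) - (if t mod int (p ^ e) = a mod int (p ^ e) then 1 else 0)"
    using univ_delta[OF p] by blast
  define c' where "c' = (\<lambda>k. if k < K then c k else 0)"
  have "(\<Sum>k<K. c' k * int_binom t k) = (\<Sum>k<K. c k * int_binom t k)" for t
    by (simp add: c'_def)
  then show ?thesis using h by (intro exI[of _ c'] exI[of _ K]) (auto simp: c'_def)
qed

lemma sum_extend:
  fixes c :: "nat \<Rightarrow> int"
  assumes "\<forall>k\<ge>K. c k = 0" "K \<le> K'"
  shows "(\<Sum>k<K'. c k * f k) = (\<Sum>k<K. c k * f k)"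
  by (rule sum.mono_neutral_right) (use assms in auto)

lemma rep_point:
  fixes p :: nat and b :: "'b::ab_group_add"
  assumes p: "prime p" and qs: "\<forall>q\<in>set qs. \<exists>e. q = p ^ e" and la: "length a = length qs"
    and kb: "intmul (int (p ^ M)) b = 0"
  shows "\<exists>D. polyfract (length qs) D \<and> (\<forall>x. length x = length qs \<longrightarrow>
           peval D x = (if \<forall>j<length qs. x!j mod int (qs!j) = a!j mod int (qs!j) then b else 0))"
proof -
  define n where "n = length qs"
  have "\<forall>j. \<exists>cK. j < n \<longrightarrow> (\<forall>k\<ge>snd cK. fst cK k = 0) \<and> (\<forall>t::int. int p ^ M dvd
           (\<Sum>k<snd cK. fst cK k * int_binom t k) - (if t mod int (qs!j) = a!j mod int (qs!j) then 1 else 0))"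
  proof
    fix j
    show "\<exists>cK. j < n \<longrightarrow> (\<forall>k\<ge>snd cK. fst cK k = 0) \<and> (\<forall>t::int. int p ^ M dvd
           (\<Sum>k<snd cK. fst cK k * int_binom t k) - (if t mod int (qs!j) = a!j mod int (qs!j) then 1 else 0))"
    proof (cases "j < n")
      case True
      then have "qs!j \<in> set qs" by (simp add: n_def)
      then obtain e where e: "qs!j = p ^ e" using qs by blast
      obtain c K where "(\<forall>k\<ge>K. c k = 0) \<and> (\<forall>t::int. int p ^ M dvd
           (\<Sum>k<K. c k * int_binom t k) - (if t mod int (p ^ e) = (a!j) mod int (p ^ e) then 1 else 0))"
        using univ_delta2[OF p, of M e "a!j"] by blast
      then show ?thesis using e by (intro exI[of _ "(c, K)"]) simp
    qed simp
  qed
  then obtain cK where cK: "\<And>j. j < n \<Longrightarrow> (\<forall>k\<ge>snd (cK j). fst (cK j) k = 0) \<and> (\<forall>t::int. int p ^ M dvd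
           (\<Sum>k<snd (cK j). fst (cK j) k * int_binom t k) - (if t mod int (qs!j) = a!j mod int (qs!j) then 1 else 0))"
    by metis
  define cf where "cf = (\<lambda>j. fst (cK j))"
  define K where "K = (\<Sum>j<n. snd (cK j))"
  have Kj: "j < n \<Longrightarrow> snd (cK j) \<le> K" for j unfolding K_def by (rule member_le_sum) auto
  define \<phi> where "\<phi> = (\<lambda>j t. \<Sum>k<K. cf j k * int_binom t k)"
  have phi: "int p ^ M dvd \<phi> j t - (if t mod int (qs!j) = a!j mod int (qs!j) then 1 else 0)" if j: "j < n" for j t
  proof -
    have "\<phi> j t = (\<Sum>k<snd (cK j). fst (cK j) k * int_binom t k)"
      unfolding \<phi>_def cf_def by (rule sum_extend) (use cK[OF j] Kj[OF j] in auto)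
    then show ?thesis using cK[OF j] by simp
  qed
  define D where "D = (\<lambda>d. if d \<in> box n K then intmul (\<Prod>j<n. cf j (d!j)) b else 0)"
  have supD: "{d. D d \<noteq> 0} \<subseteq> box n K" by (auto simp: D_def split: if_splits)
  have pf: "polyfract n D"
    unfolding polyfract_def using finite_subset[OF supD box_finite] supD by (auto simp: box_def)
  have ev: "peval D x = (if \<forall>j<n. x!j mod int (qs!j) = a!j mod int (qs!j) then b else 0)"
    if lx: "length x = n" for x
  proof -
    have "peval D x = (\<Sum>d\<in>box n K. intmul (mf x d) (D d))"
      by (rule peval_superset[OF box_finite supD])
    also have "\<dots> = (\<Sum>d\<in>box n K. intmul (\<Prod>j<n. int_binom (x!j) (d!j) * cf j (d!j)) b)"
      by (rule sum.cong[OF refl]) (simp add: D_def mf_def lx intmul_mult[symmetric] prod.distrib)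
    also have "\<dots> = intmul (\<Sum>d\<in>box n K. \<Prod>j<n. int_binom (x!j) (d!j) * cf j (d!j)) b"
      by (simp add: intmul_sum_left)
    also have "(\<Sum>d\<in>box n K. \<Prod>j<n. int_binom (x!j) (d!j) * cf j (d!j)) = (\<Prod>j<n. \<phi> j (x!j))"
      using box_sum[of "\<lambda>j k. int_binom (x!j) k * cf j k" n K] by (simp add: \<phi>_def mult.commute)
    also have "intmul (\<Prod>j<n. \<phi> j (x!j)) b
        = intmul (\<Prod>j<n. if x!j mod int (qs!j) = a!j mod int (qs!j) then 1 else 0) b"
      by (rule intmul_cong[OF kb]) (simp, rule prod_dvd_diff, use phi in simp)
    also have "\<dots> = (if \<forall>j<n. x!j mod int (qs!j) = a!j mod int (qs!j) then b else 0)"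
    proof (cases "\<forall>j<n. x!j mod int (qs!j) = a!j mod int (qs!j)")
      case True then show ?thesis by simp
    next
      case False
      then obtain j where j: "j < n" "x!j mod int (qs!j) \<noteq> a!j mod int (qs!j)" by blast
      have P0: "(\<Prod>j<n. if x!j mod int (qs!j) = a!j mod int (qs!j) then 1 else 0) = (0::int)"
        by (rule prod_zero) (use j in \<open>auto intro!: bexI[of _ j]\<close>)
      show ?thesis using False by (subst P0) auto
    qed
    finally show ?thesis .
  qed
  show ?thesis using pf ev unfolding n_def by blast
qed



lemma Arep_finite: "finite (Arep qs)"
proof -
  have "Arep qs \<subseteq> {xs. set xs \<subseteq> {0..<int (sum_list qs)} \<and> length xs = length qs}"
  proof
    fix x assume x: "x \<in> Arep qs"
    have "set x \<subseteq> {0..<int (sum_list qs)}"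
    proof
      fix v assume "v \<in> set x"
      then obtain j where j: "j < length x" "v = x!j" by (auto simp: in_set_conv_nth)
      have jq: "j < length qs" using x j by (simp add: Arep_def)
      have "qs!j \<le> sum_list qs" using member_le_sum_list[of "qs!j" qs] jq by simp
      then show "v \<in> {0..<int (sum_list qs)}" using x jq j by (auto simp: Arep_def)
    qed
    then show "x \<in> {xs. set xs \<subseteq> {0..<int (sum_list qs)} \<and> length xs = length qs}" using x by (simp add: Arep_def)
  qed
  moreover have "finite {xs. set xs \<subseteq> {0..<int (sum_list qs)} \<and> length xs = length qs}"
    by (rule finite_lists_length_eq) simp
  ultimately show ?thesis by (rule finite_subset)
qed

lemma Arep_mod: "x \<in> Arep qs \<Longrightarrow> j < length qs \<Longrightarrow> x!j mod int (qs!j) = x!j"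
  by (simp add: Arep_def)

lemma rep_block:
  fixes p :: nat and f :: "int list \<Rightarrow> 'b::{ab_group_add,finite}"
  assumes p: "prime p" and qs: "\<forall>q\<in>set qs. \<exists>e. q = p ^ e" and fp: "\<forall>a\<in>Arep qs. f a \<in> prim p"
  shows "\<exists>D. periodic_pf qs D \<and> (\<forall>a\<in>Arep qs. peval D a = f a)"
proof -
  define n where "n = length qs"
  define cond where "cond = (\<lambda>x a. \<forall>j<n. x!j mod int (qs!j) = a!j mod int (qs!j))"
  have "\<forall>a. \<exists>D. a \<in> Arep qs \<longrightarrow> polyfract n D \<and> (\<forall>x. length x = n \<longrightarrow> peval D x = (if cond x a then f a else 0))"
  proof
    fix a
    show "\<exists>D. a \<in> Arep qs \<longrightarrow> polyfract n D \<and> (\<forall>x. length x = n \<longrightarrow> peval D x = (if cond x a then f a else 0))"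
    proof (cases "a \<in> Arep qs")
      case True
      then obtain k where k: "intmul (int (p ^ k)) (f a) = 0" using fp by (auto simp: prim_def)
      have la: "length a = length qs" using True by (simp add: Arep_def)
      show ?thesis using rep_point[OF p qs la k] by (auto simp: n_def cond_def)
    qed simp
  qed
  then obtain Df where Df: "\<And>a. a \<in> Arep qs \<Longrightarrow> polyfract n (Df a) \<and>
      (\<forall>x. length x = n \<longrightarrow> peval (Df a) x = (if cond x a then f a else 0))" by metis
  define D where "D = (\<lambda>d. \<Sum>a\<in>Arep qs. Df a d)"
  have fin: "\<And>a. a \<in> Arep qs \<Longrightarrow> finite {d. Df a d \<noteq> 0}" using Df by (simp add: polyfract_def)
  have ev: "peval D x = (\<Sum>a\<in>Arep qs. if cond x a then f a else 0)" if lx: "length x = n" for x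
  proof -
    have "peval D x = (\<Sum>a\<in>Arep qs. peval (Df a) x)"
      unfolding D_def by (rule peval_sum[OF Arep_finite fin])
    also have "\<dots> = (\<Sum>a\<in>Arep qs. if cond x a then f a else 0)"
      using Df lx by (intro sum.cong) auto
    finally show ?thesis .
  qed
  have pf: "polyfract n D"
  proof -
    have sub: "{d. D d \<noteq> 0} \<subseteq> (\<Union>a\<in>Arep qs. {d. Df a d \<noteq> 0})"
    proof
      fix d assume "d \<in> {d. D d \<noteq> 0}"
      then have ne: "(\<Sum>a\<in>Arep qs. Df a d) \<noteq> 0" by (simp add: D_def)
      have "\<exists>a\<in>Arep qs. Df a d \<noteq> 0"
      proof (rule ccontr)
        assume "\<not> (\<exists>a\<in>Arep qs. Df a d \<noteq> 0)"
        then have "\<forall>a\<in>Arep qs. Df a d = 0" by blast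
        then have "(\<Sum>a\<in>Arep qs. Df a d) = 0" by (rule sum.neutral)
        with ne show False by simp
      qed
      then show "d \<in> (\<Union>a\<in>Arep qs. {d. Df a d \<noteq> 0})" by blast
    qed
    have "finite {d. D d \<noteq> 0}" using fin Arep_finite by (intro finite_subset[OF sub]) auto
    moreover have "\<forall>d. D d \<noteq> 0 \<longrightarrow> length d = n"
    proof (intro allI impI)
      fix d assume "D d \<noteq> 0"
      then obtain a where "a \<in> Arep qs" "Df a d \<noteq> 0" using sub by blast
      then show "length d = n" using Df by (auto simp: polyfract_def)
    qed
    ultimately show ?thesis by (simp add: polyfract_def)
  qed
  have per: "peval D (x[j := x!j + int (qs!j)]) = peval D x" if lx: "length x = n" and j: "j < n" for x j
  proof -
    have "cond (x[j := x!j + int (qs!j)]) a = cond x a" for a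
      unfolding cond_def using lx j by (auto simp: nth_list_update)
    then show ?thesis using ev lx by simp
  qed
  have val: "peval D a = f a" if a: "a \<in> Arep qs" for a
  proof -
    have la: "length a = n" using a by (simp add: Arep_def n_def)
    have "peval D a = (\<Sum>a'\<in>Arep qs. if cond a a' then f a' else 0)" by (rule ev[OF la])
    also have "\<dots> = (\<Sum>a'\<in>{a}. if cond a a' then f a' else 0)"
    proof (rule sum.mono_neutral_right[OF Arep_finite])
      show "{a} \<subseteq> Arep qs" using a by simp
      show "\<forall>a'\<in>Arep qs - {a}. (if cond a a' then f a' else 0) = 0"
      proof
        fix a' assume a': "a' \<in> Arep qs - {a}"
        have "\<not> cond a a'"
        proof
          assume c: "cond a a'"
          have "a' = a"
          proof (rule nth_equalityI)
            show "length a' = length a" using a a' by (simp add: Arep_def)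
            fix j assume "j < length a'"
            then have j: "j < n" using a' by (simp add: Arep_def n_def)
            then show "a'!j = a!j" using c Arep_mod[OF a] a' Arep_mod[of a' qs j]
              by (simp add: cond_def n_def)
          qed
          then show False using a' by simp
        qed
        then show "(if cond a a' then f a' else 0) = 0" by simp
      qed
    qed
    also have "\<dots> = f a" by (simp add: cond_def)
    finally show ?thesis .
  qed
  show ?thesis
    by (intro exI[of _ D] conjI) (use pf per val in \<open>auto simp: periodic_pf_def n_def\<close>)
qed



lemma supp_sum_sub:
  fixes C :: "'i \<Rightarrow> nat list \<Rightarrow> 'b::ab_group_add"
  shows "{d. (\<Sum>i\<in>I. C i d) \<noteq> 0} \<subseteq> (\<Union>i\<in>I. {d. C i d \<noteq> 0})"
proof
  fix d assume "d \<in> {d. (\<Sum>i\<in>I. C i d) \<noteq> 0}"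
  then have ne: "(\<Sum>i\<in>I. C i d) \<noteq> 0" by simp
  have "\<exists>i\<in>I. C i d \<noteq> 0"
  proof (rule ccontr)
    assume "\<not> (\<exists>i\<in>I. C i d \<noteq> 0)"
    then have "\<forall>i\<in>I. C i d = 0" by blast
    then have "(\<Sum>i\<in>I. C i d) = 0" by (rule sum.neutral)
    with ne show False by simp
  qed
  then show "d \<in> (\<Union>i\<in>I. {d. C i d \<noteq> 0})" by blast
qed

lemma polyfract_sum:
  fixes C :: "'i \<Rightarrow> nat list \<Rightarrow> 'b::ab_group_add"
  assumes "finite I" "\<And>i. i \<in> I \<Longrightarrow> polyfract n (C i)"
  shows "polyfract n (\<lambda>d. \<Sum>i\<in>I. C i d)"
  unfolding polyfract_def
proof (intro conjI allI impI)
  show "finite {d. (\<Sum>i\<in>I. C i d) \<noteq> 0}"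
    by (rule finite_subset[OF supp_sum_sub]) (use assms in \<open>auto simp: polyfract_def\<close>)
  fix d assume "(\<Sum>i\<in>I. C i d) \<noteq> 0"
  then obtain i where "i \<in> I" "C i d \<noteq> 0" using supp_sum_sub[where I=I and C=C] by blast
  then show "length d = n" using assms(2) by (auto simp: polyfract_def)
qed

lemma polyfract_intmul:
  "polyfract n C \<Longrightarrow> polyfract n (\<lambda>d. intmul E (C d))"
proof -
  assume pf: "polyfract n C"
  have "{d. intmul E (C d) \<noteq> 0} \<subseteq> {d. C d \<noteq> 0}" by auto
  then show ?thesis using pf unfolding polyfract_def by (auto intro: finite_subset)
qed

lemma peval_prim:
  fixes C :: "nat list \<Rightarrow> 'b::{ab_group_add,finite}"
  assumes p: "prime p" and c: "\<And>d. C d \<in> prim p"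
  shows "peval C x \<in> prim p"
  unfolding peval_mf by (rule prim_sum[OF p]) (use prim_intmul[OF p] c in auto)

theorem theorem3p15:
  fixes ps :: "nat list" and Q :: "nat list list"
  assumes "distinct ps"
    and "length Q = length ps"
    and "set ps = {p. prime p \<and> p dvd (prod_list (concat Q) * card (UNIV :: 'b::{ab_group_add, finite} set))}"
    and "\<forall>i<length ps. \<forall>q\<in>set (Q!i). \<exists>e. q = (ps!i) ^ e"
  shows "(\<forall>C :: nat list \<Rightarrow> 'b. polyfract (length (concat Q)) C \<longrightarrow>
            (periodic_pf (concat Q) C \<longleftrightarrow>
              (\<forall>i<length ps. only_block Q i (coordC ps i C) \<and>
                 periodic_pf (Q!i) (blockC Q i (coordC ps i C)))))
      \<and> {restrict (peval C) (Arep (concat Q)) | C :: nat list \<Rightarrow> 'b. periodic_pf (concat Q) C}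
        = {restrict g (Arep (concat Q)) | g :: int list \<Rightarrow> 'b.
             \<exists>fs :: (int list \<Rightarrow> 'b) list. length fs = length ps \<and>
               (\<forall>i<length ps. \<forall>a \<in> Arep (Q!i). (fs!i) a \<in> prim (ps!i)) \<and>
               (\<forall>x. g x = (\<Sum>i<length ps. (fs!i) (blockx Q i x)))}"
proof -
  note a1 = assms(1) and a2 = assms(2) and a3 = assms(3) and a4 = assms(4)
  define N where "N = card (UNIV :: 'b set)"
  define n where "n = length (concat Q)"
  have pr: "\<And>i. i < length ps \<Longrightarrow> prime (ps!i)" using a3 nth_mem by blast
  have g: "goodps ps (card (UNIV :: 'b set))"
    unfolding goodps_def using a1 a3 by auto
  define E where "E = (\<lambda>i. Ecoef N (ps!i))"
  have cC: "coordC ps i C = (\<lambda>d. intmul (E i) (C d))" if "i < length ps" for i and C :: "nat list \<Rightarrow> 'b"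
    using pproj_eq[OF g that] by (simp add: coordC_def E_def N_def)
  have cprim: "coordC ps i C d \<in> prim (ps!i)" if "i < length ps" for i and C :: "nat list \<Rightarrow> 'b" and d
    using pproj_prim[OF g that] by (simp add: coordC_def)
  have cpf: "polyfract n (coordC ps i C)" if "i < length ps" "polyfract n C" for i and C :: "nat list \<Rightarrow> 'b"
    using cC[OF that(1)] polyfract_intmul[OF that(2)] by simp
  have cpev: "peval (coordC ps i C) x = intmul (E i) (peval C x)"
    if "i < length ps" "polyfract n C" for i and C :: "nat list \<Rightarrow> 'b" and x
    using cC[OF that(1)] peval_intmul[of C "E i" x] that(2) by (simp add: polyfract_def)
  have csum: "peval C x = (\<Sum>i<length ps. peval (coordC ps i C) x)"
    if "polyfract n C" for C :: "nat list \<Rightarrow> 'b" and x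
  proof -
    have "C = (\<lambda>d. \<Sum>i<length ps. coordC ps i C d)"
      using pproj_sum[OF g] by (simp add: coordC_def)
    then have "peval C x = peval (\<lambda>d. \<Sum>i<length ps. coordC ps i C d) x"
      by (rule arg_cong[where f="\<lambda>C. peval C x"])
    also have "\<dots> = (\<Sum>i<length ps. peval (coordC ps i C) x)"
    proof (rule peval_sum)
      fix i assume "i \<in> {..<length ps}"
      then have "polyfract n (coordC ps i C)" using cpf that by simp
      then show "finite {d. coordC ps i C d \<noteq> 0}" by (simp add: polyfract_def)
    qed simp
    finally show ?thesis .
  qed
  have lQ: "length Q = length ps" by (rule a2)
  have fwd: "only_block Q i (coordC ps i C) \<and> periodic_pf (Q!i) (blockC Q i (coordC ps i C))"
    if pf: "polyfract n C" and per: "periodic_pf (concat Q) C" and i: "i < length ps" for C :: "nat list \<Rightarrow> 'b" and i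
  proof -
    define C' where "C' = coordC ps i C"
    have pf': "polyfract n C'" using cpf[OF i pf] by (simp add: C'_def)
    have per': "peval C' (x[j := x!j + int (concat Q ! j)]) = peval C' x"
      if "length x = n" "j < n" for x j
      using per that cpev[OF i pf] by (simp add: C'_def periodic_pf_def n_def)
    have kill: "intmul (int (ps!i ^ multiplicity (ps!i) N)) (C' d) = 0" for d
      using cprim[OF i, of C d] prim_iff[OF pr[OF i], where b="C' d"] by (simp add: C'_def vm_def N_def)
    have ob: "only_block Q i C'"
      unfolding only_block_def
    proof (intro allI impI)
      fix d j assume d: "C' d \<noteq> 0" and j: "j < length d" and jb: "j \<notin> blockvars Q i"
      have ld: "length d = n" using pf' d by (simp add: polyfract_def)
      have jn: "j < n" using j ld by simp
      obtain k where k: "k < length Q" "j \<in> blockvars Q k" using blockvars_exists[of j Q] jn by (auto simp: n_def)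
      have ki: "k \<noteq> i" using k jb by auto
      have kp: "k < length ps" using k lQ by simp
      have jk: "j - off Q k < length (Q!k)" using k(2) by (auto simp: blockvars_def)
      have cq: "concat Q ! j = Q!k!(j - off Q k)" by (rule concat_nth_block[OF k])
      obtain e where e: "concat Q ! j = (ps!k) ^ e" using a4 kp nth_mem[OF jk] cq by metis
      obtain M' where M': "\<forall>x. length x = n \<longrightarrow> peval C' (x[j := x!j + int (ps!i ^ M')]) = peval C' x"
        using peval_p_period[OF pr[OF i] pf' kill jn] by blast
      have cop: "coprime (int ((ps!k) ^ e)) (int ((ps!i) ^ M'))"
      proof -
        have "ps!k \<noteq> ps!i" using a1 ki kp i by (simp add: nth_eq_iff_index_eq)
        then have "coprime (ps!k) (ps!i)" by (rule primes_coprime[OF pr[OF kp] pr[OF i]])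
        then show ?thesis by simp
      qed
      have shift1: "peval C' (x[j := x!j + 1]) = peval C' x" if lx: "length x = n" for x
      proof -
        define h where "h = (\<lambda>s. peval C' (x[j := s]))"
        have h1: "h (s + int ((ps!k) ^ e)) = h s" for s
        proof -
          have "length (x[j := s]) = n" using lx by simp
          from per'[OF this jn] show ?thesis using jn lx e by (simp add: h_def)
        qed
        have h2: "h (s + int ((ps!i) ^ M')) = h s" for s
        proof -
          have "length (x[j := s]) = n" using lx by simp
          from M'[rule_format, OF this] show ?thesis using jn lx by (simp add: h_def)
        qed
        have "h (x!j + 1) = h (x!j)" by (rule period_one[OF h1 h2 cop])
        then show ?thesis by (simp add: h_def)
      qed
      show "d!j = 0" by (rule const_imp_zero[OF pf' jn shift1 d])
    qed
    have "periodic_pf (Q!i) (blockC Q i C')"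
      by (rule blockC_periodic) (use i lQ pf' ob per' in \<open>simp_all add: n_def\<close>)
    then show ?thesis using ob by (simp add: C'_def)
  qed
  have bwd: "periodic_pf (concat Q) C"
    if pf: "polyfract n C" and H: "\<forall>i<length ps. only_block Q i (coordC ps i C) \<and> periodic_pf (Q!i) (blockC Q i (coordC ps i C))"
    for C :: "nat list \<Rightarrow> 'b"
    unfolding periodic_pf_def
  proof (intro conjI allI impI)
    show "polyfract (length (concat Q)) C" using pf by (simp add: n_def)
    fix x :: "int list" and j assume lx: "length x = length (concat Q)" and j: "j < length (concat Q)"
    show "peval C (x[j := x!j + int (concat Q ! j)]) = peval C x"
    proof (rule per_from_blocks[where hs="\<lambda>i. peval (blockC Q i (coordC ps i C))", OF _ _ lx j])
      fix y :: "int list"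
      assume ly: "length y = length (concat Q)"
      have "peval C y = (\<Sum>i<length ps. peval (coordC ps i C) y)" by (rule csum[OF pf])
      also have "\<dots> = (\<Sum>i<length Q. peval (blockC Q i (coordC ps i C)) (blockx Q i y))"
        using lQ H cpf[OF _ pf] ly by (intro sum.cong) (auto intro!: peval_block simp: n_def)
      finally show "peval C y = (\<Sum>i<length Q. peval (blockC Q i (coordC ps i C)) (blockx Q i y))" .
    next
      fix i and y :: "int list" and j' assume "i < length Q" "length y = length (Q!i)" "j' < length (Q!i)"
      then show "peval (blockC Q i (coordC ps i C)) (y[j' := y!j' + int (Q!i!j')]) = peval (blockC Q i (coordC ps i C)) y"
        using H lQ by (simp add: periodic_pf_def)
    qed
  qed
  have part1: "\<forall>C :: nat list \<Rightarrow> 'b. polyfract (length (concat Q)) C \<longrightarrow>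
            (periodic_pf (concat Q) C \<longleftrightarrow>
              (\<forall>i<length ps. only_block Q i (coordC ps i C) \<and>
                 periodic_pf (Q!i) (blockC Q i (coordC ps i C))))"
    using fwd bwd by (auto simp: n_def)
  have sub1: "restrict (peval C) (Arep (concat Q)) \<in> {restrict g (Arep (concat Q)) | g :: int list \<Rightarrow> 'b.
             \<exists>fs :: (int list \<Rightarrow> 'b) list. length fs = length ps \<and>
               (\<forall>i<length ps. \<forall>a \<in> Arep (Q!i). (fs!i) a \<in> prim (ps!i)) \<and>
               (\<forall>x. g x = (\<Sum>i<length ps. (fs!i) (blockx Q i x)))}"
    if per: "periodic_pf (concat Q) C" for C :: "nat list \<Rightarrow> 'b"
  proof -
    have pf: "polyfract n C" using per by (simp add: periodic_pf_def n_def)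
    define fs where "fs = map (\<lambda>i. peval (blockC Q i (coordC ps i C))) [0..<length ps]"
    define g where "g = (\<lambda>x. \<Sum>i<length ps. (fs!i) (blockx Q i x))"
    have fsp: "\<forall>i<length ps. \<forall>a \<in> Arep (Q!i). (fs!i) a \<in> prim (ps!i)"
    proof (intro allI impI ballI)
      fix i a assume i: "i < length ps" and "a \<in> Arep (Q!i)"
      have "\<And>d. blockC Q i (coordC ps i C) d \<in> prim (ps!i)"
        using cprim[OF i] by (simp add: blockC_def prim_0)
      then have "peval (blockC Q i (coordC ps i C)) a \<in> prim (ps!i)" by (rule peval_prim[OF pr[OF i]])
      then show "(fs!i) a \<in> prim (ps!i)" using i by (simp add: fs_def)
    qed
    have eq: "restrict (peval C) (Arep (concat Q)) = restrict g (Arep (concat Q))"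
    proof (rule ext)
      fix x
      show "restrict (peval C) (Arep (concat Q)) x = restrict g (Arep (concat Q)) x"
      proof (cases "x \<in> Arep (concat Q)")
        case True
        then have lx: "length x = length (concat Q)" by (simp add: Arep_def)
        have "peval C x = (\<Sum>i<length ps. peval (coordC ps i C) x)" by (rule csum[OF pf])
        also have "\<dots> = g x" unfolding g_def fs_def
          using fwd[OF pf per] lQ cpf[OF _ pf] lx by (intro sum.cong) (auto intro!: peval_block simp: n_def)
        finally show ?thesis using True by simp
      qed simp
    qed
    show ?thesis using eq fsp by (intro CollectI exI[of _ g] conjI exI[of _ fs]) (auto simp: fs_def g_def)
  qed
  have sub2: "\<exists>C :: nat list \<Rightarrow> 'b. periodic_pf (concat Q) C \<and> restrict (peval C) (Arep (concat Q)) = restrict g (Arep (concat Q))"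
    if fs: "length fs = length ps" "\<forall>i<length ps. \<forall>a \<in> Arep (Q!i). (fs!i) a \<in> prim (ps!i)"
      "\<forall>x. g x = (\<Sum>i<length ps. (fs!i) (blockx Q i x))"
    for g :: "int list \<Rightarrow> 'b" and fs :: "(int list \<Rightarrow> 'b) list"
  proof -
    have "\<forall>i. \<exists>D :: nat list \<Rightarrow> 'b. i < length ps \<longrightarrow> periodic_pf (Q!i) D \<and> (\<forall>a\<in>Arep (Q!i). peval D a = (fs!i) a)"
    proof
      fix i
      show "\<exists>D :: nat list \<Rightarrow> 'b. i < length ps \<longrightarrow> periodic_pf (Q!i) D \<and> (\<forall>a\<in>Arep (Q!i). peval D a = (fs!i) a)"
      proof (cases "i < length ps")
        case True
        from rep_block[OF pr[OF True], of "Q!i" "fs!i"] a4 fs(2) True show ?thesis by blast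
      qed simp
    qed
    then obtain D :: "nat \<Rightarrow> nat list \<Rightarrow> 'b" where D: "\<And>i. i < length ps \<Longrightarrow> periodic_pf (Q!i) (D i) \<and> (\<forall>a\<in>Arep (Q!i). peval (D i) a = (fs!i) a)"
      by metis
    have Dpf: "polyfract (length (Q!i)) (D i)" if "i < length ps" for i
      using D[OF that] by (simp add: periodic_pf_def)
    define C where "C = (\<lambda>d. \<Sum>i<length ps. embedC Q i (D i) d)"
    have pfC: "polyfract n C"
      unfolding C_def n_def by (rule polyfract_sum) (use embedC_props(1)[OF _ Dpf] lQ in auto)
    have evC: "peval C x = (\<Sum>i<length Q. peval (D i) (blockx Q i x))" if lx: "length x = length (concat Q)" for x
    proof -
      have "peval C x = (\<Sum>i<length ps. peval (embedC Q i (D i)) x)"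
        unfolding C_def by (rule peval_sum) (use embedC_props(1)[OF _ Dpf] lQ in \<open>auto simp: polyfract_def\<close>)
      also have "\<dots> = (\<Sum>i<length Q. peval (D i) (blockx Q i x))"
        using peval_embedC[OF _ Dpf lx] lQ by simp
      finally show ?thesis .
    qed
    have perC: "periodic_pf (concat Q) C"
      unfolding periodic_pf_def
    proof (intro conjI allI impI)
      show "polyfract (length (concat Q)) C" using pfC by (simp add: n_def)
      fix x :: "int list" and j assume lx: "length x = length (concat Q)" and j: "j < length (concat Q)"
      show "peval C (x[j := x!j + int (concat Q ! j)]) = peval C x"
      proof (rule per_from_blocks[where hs="\<lambda>i. peval (D i)", OF evC _ lx j])
        fix i and y :: "int list" and j' assume "i < length Q" "length y = length (Q!i)" "j' < length (Q!i)"
        then show "peval (D i) (y[j' := y!j' + int (Q!i!j')]) = peval (D i) y"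
          using D lQ by (simp add: periodic_pf_def)
      qed
    qed
    have "restrict (peval C) (Arep (concat Q)) = restrict g (Arep (concat Q))"
    proof (rule ext)
      fix x
      show "restrict (peval C) (Arep (concat Q)) x = restrict g (Arep (concat Q)) x"
      proof (cases "x \<in> Arep (concat Q)")
        case True
        then have lx: "length x = length (concat Q)" by (simp add: Arep_def)
        have "peval C x = (\<Sum>i<length Q. peval (D i) (blockx Q i x))" by (rule evC[OF lx])
        also have "\<dots> = (\<Sum>i<length ps. (fs!i) (blockx Q i x))"
          using D blockx_Arep[OF _ True] lQ by (intro sum.cong) auto
        also have "\<dots> = g x" using fs(3) by simp
        finally show ?thesis using True by simp
      qed simp
    qed
    then show ?thesis using perC by blast
  qed
  have part2: "{restrict (peval C) (Arep (concat Q)) | C :: nat list \<Rightarrow> 'b. periodic_pf (concat Q) C}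
        = {restrict g (Arep (concat Q)) | g :: int list \<Rightarrow> 'b.
             \<exists>fs :: (int list \<Rightarrow> 'b) list. length fs = length ps \<and>
               (\<forall>i<length ps. \<forall>a \<in> Arep (Q!i). (fs!i) a \<in> prim (ps!i)) \<and>
               (\<forall>x. g x = (\<Sum>i<length ps. (fs!i) (blockx Q i x)))}"
  proof (rule set_eqI)
    fix F
    show "F \<in> {restrict (peval C) (Arep (concat Q)) | C :: nat list \<Rightarrow> 'b. periodic_pf (concat Q) C} \<longleftrightarrow>
          F \<in> {restrict g (Arep (concat Q)) | g :: int list \<Rightarrow> 'b.
             \<exists>fs :: (int list \<Rightarrow> 'b) list. length fs = length ps \<and>
               (\<forall>i<length ps. \<forall>a \<in> Arep (Q!i). (fs!i) a \<in> prim (ps!i)) \<and>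
               (\<forall>x. g x = (\<Sum>i<length ps. (fs!i) (blockx Q i x)))}"
    proof
      assume "F \<in> {restrict (peval C) (Arep (concat Q)) | C :: nat list \<Rightarrow> 'b. periodic_pf (concat Q) C}"
      then obtain C :: "nat list \<Rightarrow> 'b" where "F = restrict (peval C) (Arep (concat Q))" "periodic_pf (concat Q) C" by blast
      then show "F \<in> {restrict g (Arep (concat Q)) | g :: int list \<Rightarrow> 'b.
             \<exists>fs :: (int list \<Rightarrow> 'b) list. length fs = length ps \<and>
               (\<forall>i<length ps. \<forall>a \<in> Arep (Q!i). (fs!i) a \<in> prim (ps!i)) \<and>
               (\<forall>x. g x = (\<Sum>i<length ps. (fs!i) (blockx Q i x)))}" using sub1 by simp
    next
      assume "F \<in> {restrict g (Arep (concat Q)) | g :: int list \<Rightarrow> 'b.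
             \<exists>fs :: (int list \<Rightarrow> 'b) list. length fs = length ps \<and>
               (\<forall>i<length ps. \<forall>a \<in> Arep (Q!i). (fs!i) a \<in> prim (ps!i)) \<and>
               (\<forall>x. g x = (\<Sum>i<length ps. (fs!i) (blockx Q i x)))}"
      then obtain g :: "int list \<Rightarrow> 'b" and fs where gf: "F = restrict g (Arep (concat Q))" "length fs = length ps"
        "\<forall>i<length ps. \<forall>a \<in> Arep (Q!i). (fs!i) a \<in> prim (ps!i)" "\<forall>x. g x = (\<Sum>i<length ps. (fs!i) (blockx Q i x))"
        by blast
      obtain C0 :: "nat list \<Rightarrow> 'b" where C0: "periodic_pf (concat Q) C0" "restrict (peval C0) (Arep (concat Q)) = restrict g (Arep (concat Q))"
        using sub2[OF gf(2-4)] by blast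
      have "F = restrict (peval C0) (Arep (concat Q))" using gf(1) C0(2) by simp
      then show "F \<in> {restrict (peval C) (Arep (concat Q)) | C :: nat list \<Rightarrow> 'b. periodic_pf (concat Q) C}"
        using C0(1) by blast
    qed
  qed
  show ?thesis using part1 part2 by blast
qed


end
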